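(* The Lie algebra of analytic vertical infinitesimal symplectic symmetries of $Z_{G,\epsilon}=x(x-\epsilon)\partial_x+\chi(u_1u_2,x,\epsilon)(u_1\partial_{u_1}-u_2\partial_{u_2})$ (analytic on a neighborhood of $0$ in $(u,x,\epsilon)$) consists of the Hamiltonian vector fields $\xi=a(u_1u_2,\epsilon)(u_1\partial_{u_1}-u_2\partial_{u_2})$ with $a(h,\epsilon)$ analytic, and it is commutative.
   Context: $\chi(h,x,\epsilon)=\chi^{(0)}(h,\epsilon)+x\chi^{(1)}(h,\epsilon)$ is an analytic germ, affine in $x$, with $\chi(0,0,0)\ne0$. A vertical infinitesimal symplectic symmetry of $Z_{G,\epsilon}$ is a germ of vector field $\xi$ in the $(u,x)$-space with $\xi\cdot x=0$, $\mathcal L_\xi(du_1\wedge du_2)=0$ and $[\xi,Z_{G,\epsilon}]=0$. *)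

theory Defs
  imports "HOL-Analysis.Analysis"
begin

type_synonym fn4 = "complex \<Rightarrow> complex \<Rightarrow> complex \<Rightarrow> complex \<Rightarrow> complex"
  (* arguments in the order u1 u2 x \<epsilon> *)

type_synonym vfield = "fn4 \<times> fn4 \<times> fn4"
  (* components along \<partial>u1, \<partial>u2, \<partial>x; a vector field in (u,x)-space depending on \<epsilon> *)

text \<open>Analytic germ at 0 in two complex variables: given near 0 by an
  (absolutely, i.e. unconditionally) convergent power series.\<close>
definition analytic0_2 :: "(complex \<Rightarrow> complex \<Rightarrow> complex) \<Rightarrow> bool" where
  "analytic0_2 f \<longleftrightarrow> (\<exists>r>0. \<exists>c::nat \<Rightarrow> nat \<Rightarrow> complex.
     \<forall>z1 z2. norm z1 < r \<and> norm z2 < r \<longrightarrow>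
       ((\<lambda>(i,j). c i j * z1 ^ i * z2 ^ j) has_sum f z1 z2) UNIV)"

definition analytic0_4 :: "fn4 \<Rightarrow> bool" where
  "analytic0_4 f \<longleftrightarrow> (\<exists>r>0. \<exists>c::nat \<Rightarrow> nat \<Rightarrow> nat \<Rightarrow> nat \<Rightarrow> complex.
     \<forall>z1 z2 z3 z4. norm z1 < r \<and> norm z2 < r \<and> norm z3 < r \<and> norm z4 < r \<longrightarrow>
       ((\<lambda>(i,j,k,l). c i j k l * z1 ^ i * z2 ^ j * z3 ^ k * z4 ^ l) has_sum f z1 z2 z3 z4) UNIV)"

definition near0 :: "(complex \<Rightarrow> complex \<Rightarrow> complex \<Rightarrow> complex \<Rightarrow> bool) \<Rightarrow> bool" where
  "near0 P \<longleftrightarrow> (\<exists>r>0. \<forall>u1 u2 x e. norm u1 < r \<and> norm u2 < r \<and> norm x < r \<and> norm e < r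
      \<longrightarrow> P u1 u2 x e)"

definition d_u1 :: "fn4 \<Rightarrow> fn4" where
  "d_u1 f = (\<lambda>u1 u2 x e. deriv (\<lambda>t. f t u2 x e) u1)"
definition d_u2 :: "fn4 \<Rightarrow> fn4" where
  "d_u2 f = (\<lambda>u1 u2 x e. deriv (\<lambda>t. f u1 t x e) u2)"
definition d_x :: "fn4 \<Rightarrow> fn4" where
  "d_x f = (\<lambda>u1 u2 x e. deriv (\<lambda>t. f u1 u2 t e) x)"

definition vf_apply :: "vfield \<Rightarrow> fn4 \<Rightarrow> fn4" where
  "vf_apply X F = (\<lambda>u1 u2 x e.
      fst X u1 u2 x e * d_u1 F u1 u2 x e
    + fst (snd X) u1 u2 x e * d_u2 F u1 u2 x e
    + snd (snd X) u1 u2 x e * d_x F u1 u2 x e)"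

definition lie_bracket :: "vfield \<Rightarrow> vfield \<Rightarrow> vfield" where
  "lie_bracket X Y =
     ((\<lambda>u1 u2 x e. vf_apply X (fst Y) u1 u2 x e - vf_apply Y (fst X) u1 u2 x e),
      (\<lambda>u1 u2 x e. vf_apply X (fst (snd Y)) u1 u2 x e - vf_apply Y (fst (snd X)) u1 u2 x e),
      (\<lambda>u1 u2 x e. vf_apply X (snd (snd Y)) u1 u2 x e - vf_apply Y (snd (snd X)) u1 u2 x e))"

definition germ_eq :: "vfield \<Rightarrow> vfield \<Rightarrow> bool" where
  "germ_eq X Y \<longleftrightarrow> near0 (\<lambda>u1 u2 x e.
      fst X u1 u2 x e = fst Y u1 u2 x e \<and>
      fst (snd X) u1 u2 x e = fst (snd Y) u1 u2 x e \<and>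
      snd (snd X) u1 u2 x e = snd (snd Y) u1 u2 x e)"

definition zero_vf :: vfield where
  "zero_vf = ((\<lambda>u1 u2 x e. 0), (\<lambda>u1 u2 x e. 0), (\<lambda>u1 u2 x e. 0))"

definition chi_fun :: "(complex \<Rightarrow> complex \<Rightarrow> complex) \<Rightarrow> (complex \<Rightarrow> complex \<Rightarrow> complex)
    \<Rightarrow> complex \<Rightarrow> complex \<Rightarrow> complex \<Rightarrow> complex" where
  "chi_fun chi0 chi1 h x e = chi0 h e + x * chi1 h e"

definition Z_G :: "(complex \<Rightarrow> complex \<Rightarrow> complex) \<Rightarrow> (complex \<Rightarrow> complex \<Rightarrow> complex) \<Rightarrow> vfield" where
  "Z_G chi0 chi1 =
     ((\<lambda>u1 u2 x e. chi_fun chi0 chi1 (u1 * u2) x e * u1),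
      (\<lambda>u1 u2 x e. - chi_fun chi0 chi1 (u1 * u2) x e * u2),
      (\<lambda>u1 u2 x e. x * (x - e)))"

text \<open>Coefficients of the Lie derivative L_X(du1\<and>du2) in (u,x)-space
  (Cartan: L_X \<omega> = d(\<iota>_X \<omega>) = d(A du2 - B du1) for X = A\<partial>u1 + B\<partial>u2 + C\<partial>x):
  the du1\<and>du2, dx\<and>du1 and dx\<and>du2 coefficients are
  \<partial>u1 A + \<partial>u2 B, -\<partial>x B, \<partial>x A.\<close>
definition lie_area_vanishes :: "vfield \<Rightarrow> bool" where
  "lie_area_vanishes X \<longleftrightarrow> near0 (\<lambda>u1 u2 x e.
      d_u1 (fst X) u1 u2 x e + d_u2 (fst (snd X)) u1 u2 x e = 0 \<and>
      - d_x (fst (snd X)) u1 u2 x e = 0 \<and>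
      d_x (fst X) u1 u2 x e = 0)"

definition vert_sympl_sym ::
  "(complex \<Rightarrow> complex \<Rightarrow> complex) \<Rightarrow> (complex \<Rightarrow> complex \<Rightarrow> complex) \<Rightarrow> vfield \<Rightarrow> bool" where
  "vert_sympl_sym chi0 chi1 X \<longleftrightarrow>
     analytic0_4 (fst X) \<and> analytic0_4 (fst (snd X)) \<and> analytic0_4 (snd (snd X)) \<and>
     near0 (\<lambda>u1 u2 x e. snd (snd X) u1 u2 x e = 0) \<and>
     lie_area_vanishes X \<and>
     germ_eq (lie_bracket X (Z_G chi0 chi1)) zero_vf"

definition ham_vf :: "(complex \<Rightarrow> complex \<Rightarrow> complex) \<Rightarrow> vfield" where
  "ham_vf a = ((\<lambda>u1 u2 x e. a (u1 * u2) e * u1), (\<lambda>u1 u2 x e. - a (u1 * u2) e * u2),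
               (\<lambda>u1 u2 x e. 0))"

end

theory Submission
  imports Defs "HOL-Complex_Analysis.Cauchy_Integral_Formula"
begin


lemma absorb:
  fixes \<rho> \<rho>2 :: real
  assumes "0 < \<rho>" "\<rho> < \<rho>2"
  shows "\<exists>K. \<forall>n. real n * \<rho> ^ n \<le> K * \<rho>2 ^ n"
proof -
  have "norm (\<rho>/\<rho>2) < 1" using assms by auto
  from powser_times_n_limit_0[OF this] have "convergent (\<lambda>n. of_nat n * (\<rho>/\<rho>2) ^ n)"
    by (auto simp: convergent_def)
  then have "Bseq (\<lambda>n. of_nat n * (\<rho>/\<rho>2) ^ n)" by (rule convergent_imp_Bseq)
  then obtain B where B: "\<And>n. norm (of_nat n * (\<rho>/\<rho>2) ^ n :: real) \<le> B"
    by (auto simp: Bseq_def)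
  show ?thesis
  proof (intro exI allI)
    fix n
    have "real n * (\<rho>/\<rho>2) ^ n \<le> B" using B[of n] assms by simp
    then have "real n * (\<rho>/\<rho>2) ^ n * \<rho>2 ^ n \<le> B * \<rho>2 ^ n"
      using assms by (intro mult_right_mono) auto
    then show "real n * \<rho> ^ n \<le> B * \<rho>2 ^ n"
      using assms by (simp add: power_divide)
  qed
qed

lemma absorb1:
  fixes \<rho> \<rho>2 :: real
  assumes "0 < \<rho>" "\<rho> < \<rho>2"
  shows "\<exists>K. \<forall>n. real n * \<rho> ^ (n - 1) \<le> K * \<rho>2 ^ n"
proof -
  obtain K where K: "\<And>n. real n * \<rho> ^ n \<le> K * \<rho>2 ^ n" using absorb[OF assms] by blast
  show ?thesis
  proof (intro exI allI)
    fix n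
    show "real n * \<rho> ^ (n - 1) \<le> (K/\<rho>) * \<rho>2 ^ n"
    proof (cases n)
      case 0 then show ?thesis using K[of 0] assms by simp
    next
      case (Suc m)
      have "real n * \<rho> ^ (n - 1) = real n * \<rho> ^ n / \<rho>" using Suc assms by simp
      also have "\<dots> \<le> K * \<rho>2 ^ n / \<rho>" using K[of n] assms by (simp add: divide_right_mono)
      finally show ?thesis by simp
    qed
  qed
qed

lemma series_deriv:
  fixes T T' :: "'i::countable \<Rightarrow> complex \<Rightarrow> complex" and M :: "'i \<Rightarrow> real"
  assumes inf: "infinite (UNIV::'i set)" and S: "open S" "convex S" "x \<in> S"
    and D: "\<And>n t. t \<in> S \<Longrightarrow> (T n has_field_derivative T' n t) (at t)"
    and B: "\<And>n t. t \<in> S \<Longrightarrow> norm (T' n t) \<le> M n"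
    and M: "M summable_on UNIV"
    and sm: "\<And>t. t \<in> S \<Longrightarrow> (\<lambda>n. T n t) summable_on UNIV"
  shows "((\<lambda>t. \<Sum>\<^sub>\<infinity>n. T n t) has_field_derivative (\<Sum>\<^sub>\<infinity>n. T' n x)) (at x)"
proof -
  define g where "g = from_nat_into (UNIV::'i set)"
  have bij: "bij_betw g UNIV UNIV" unfolding g_def
    by (rule bij_betw_from_nat_into) (auto simp: inf)
  define f where "f n t = T (g n) t" for n t
  define f' where "f' n t = T' (g n) t" for n t
  have Mg: "(\<lambda>n. M (g n)) summable_on UNIV"
    using M summable_on_reindex_bij_betw[OF bij] by blast
  have M0: "\<And>n. 0 \<le> M n" using B[OF S(3)] norm_ge_zero order_trans by blast
  have sMg: "summable (\<lambda>n. M (g n))" using Mg summable_on_imp_summable by blast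
  have unif: "uniformly_convergent_on S (\<lambda>n x. \<Sum>i<n. f' i x)"
    unfolding uniformly_convergent_on_def f'_def
    by (rule exI, rule Weierstrass_m_test[OF _ sMg]) (use B in auto)
  have smx: "summable (\<lambda>n. f n x)"
    using sm[OF S(3)] summable_on_reindex_bij_betw[OF bij, of "\<lambda>n. T n x"]
    by (auto simp: f_def intro: summable_on_imp_summable)
  have intS: "x \<in> interior S" using S by (simp add: interior_open)
  have Dw: "\<And>n t. t \<in> S \<Longrightarrow> (f n has_field_derivative f' n t) (at t within S)"
    unfolding f_def f'_def using D by (auto intro: has_field_derivative_at_within)
  have R: "((\<lambda>x. \<Sum>n. f n x) has_field_derivative (\<Sum>n. f' n x)) (at x)"
    by (rule has_field_derivative_series'(2)[OF S(2) Dw unif S(3) smx intS])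
  have eq1: "(\<Sum>\<^sub>\<infinity>n. T n t) = (\<Sum>n. f n t)" if "t \<in> S" for t
  proof -
    have "(\<lambda>n. T (g n) t) summable_on UNIV"
      using sm[OF that] summable_on_reindex_bij_betw[OF bij, of "\<lambda>n. T n t"] by auto
    then have "((\<lambda>n. T (g n) t) has_sum (\<Sum>\<^sub>\<infinity>n. T (g n) t)) UNIV" by auto
    then have "(\<lambda>n. f n t) sums (\<Sum>\<^sub>\<infinity>n. T (g n) t)"
      by (auto simp: f_def intro: has_sum_imp_sums)
    then show ?thesis using infsum_reindex_bij_betw[OF bij, of "\<lambda>n. T n t"]
      by (simp add: sums_iff)
  qed
  have eq2: "(\<Sum>\<^sub>\<infinity>n. T' n x) = (\<Sum>n. f' n x)"
  proof -
    have "(\<lambda>n. norm (T' n x)) summable_on UNIV"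
      by (rule summable_on_comparison_test[OF M]) (use B[OF S(3)] in auto)
    then have "(\<lambda>n. T' n x) summable_on UNIV" by (rule abs_summable_summable)
    then have "(\<lambda>n. T' (g n) x) summable_on UNIV"
      using summable_on_reindex_bij_betw[OF bij, of "\<lambda>n. T' n x"] by auto
    then have "((\<lambda>n. T' (g n) x) has_sum (\<Sum>\<^sub>\<infinity>n. T' (g n) x)) UNIV" by auto
    then have "(\<lambda>n. f' n x) sums (\<Sum>\<^sub>\<infinity>n. T' (g n) x)"
      by (auto simp: f'_def intro: has_sum_imp_sums)
    then show ?thesis using infsum_reindex_bij_betw[OF bij, of "\<lambda>n. T' n x"]
      by (simp add: sums_iff)
  qed
  show ?thesis
    using has_field_derivative_transform_within_open[OF R S(1) S(3), of "\<lambda>t. \<Sum>\<^sub>\<infinity>n. T n t"]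
      eq1 eq2 by simp
qed



lemma powser_deriv_gen:
  fixes c w :: "'i::countable \<Rightarrow> complex" and p :: "'i \<Rightarrow> nat"
  assumes inf: "infinite (UNIV::'i set)" and t: "norm t < \<rho>2"
    and sm: "(\<lambda>n. norm (c n * w n) * \<rho>2 ^ p n) summable_on UNIV"
  shows "((\<lambda>s. \<Sum>\<^sub>\<infinity>n. c n * s ^ p n * w n) has_field_derivative
            (\<Sum>\<^sub>\<infinity>n. c n * (of_nat (p n) * t ^ (p n - 1)) * w n)) (at t)"
    and "(\<lambda>n. c n * (of_nat (p n) * t ^ (p n - 1)) * w n) summable_on UNIV"
proof -
  define \<rho> where "\<rho> = (norm t + \<rho>2) / 2"
  have n0: "0 \<le> norm t" by simp
  have r1: "0 < \<rho>" unfolding \<rho>_def using t norm_ge_zero[of t] by argo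
  have r2: "\<rho> < \<rho>2" unfolding \<rho>_def using t norm_ge_zero[of t] by argo
  have r3: "norm t < \<rho>" unfolding \<rho>_def using t norm_ge_zero[of t] by argo
  note r = r1 r2 r3
  obtain K where K: "\<And>n. real n * \<rho> ^ (n - 1) \<le> K * \<rho>2 ^ n" using absorb1[OF r(1,2)] by blast
  define M where "M n = K * (norm (c n * w n) * \<rho>2 ^ p n)" for n
  have M: "M summable_on UNIV" unfolding M_def using sm by (rule summable_on_cmult_right)
  have Bd: "norm (c n * (of_nat (p n) * s ^ (p n - 1)) * w n) \<le> M n" if "s \<in> ball 0 \<rho>" for n s
  proof -
    have "norm (c n * (of_nat (p n) * s ^ (p n - 1)) * w n) = norm (c n * w n) * (real (p n) * norm s ^ (p n - 1))"
      by (simp add: norm_mult norm_power)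
    also have "\<dots> \<le> norm (c n * w n) * (real (p n) * \<rho> ^ (p n - 1))"
      using that by (intro mult_left_mono mult_left_mono power_mono) auto
    also have "\<dots> \<le> norm (c n * w n) * (K * \<rho>2 ^ p n)"
      by (intro mult_left_mono K) auto
    finally show ?thesis by (simp add: M_def mult_ac)
  qed
  have D: "((\<lambda>s. c n * s ^ p n * w n) has_field_derivative (c n * (of_nat (p n) * s ^ (p n - 1)) * w n)) (at s)" for n s
    by (auto intro!: derivative_eq_intros)
  have smt: "(\<lambda>n. c n * s ^ p n * w n) summable_on UNIV" if "s \<in> ball 0 \<rho>" for s
  proof -
    have "(\<lambda>n. norm (c n * s ^ p n * w n)) summable_on UNIV"
    proof (rule summable_on_comparison_test[OF sm])
      fix n
      have "norm (c n * s ^ p n * w n) = norm (c n * w n) * norm s ^ p n" by (simp add: norm_mult norm_power)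
      also have "\<dots> \<le> norm (c n * w n) * \<rho>2 ^ p n"
        using that r by (intro mult_left_mono power_mono) auto
      finally show "norm (c n * s ^ p n * w n) \<le> norm (c n * w n) * \<rho>2 ^ p n" .
    qed auto
    then show ?thesis by (rule abs_summable_summable)
  qed
  show "((\<lambda>s. \<Sum>\<^sub>\<infinity>n. c n * s ^ p n * w n) has_field_derivative
            (\<Sum>\<^sub>\<infinity>n. c n * (of_nat (p n) * t ^ (p n - 1)) * w n)) (at t)"
    by (rule series_deriv[OF inf open_ball[of 0 \<rho>] convex_ball[of 0 \<rho>] _ D Bd M smt]) (use r in auto)
  have "(\<lambda>n. norm (c n * (of_nat (p n) * t ^ (p n - 1)) * w n)) summable_on UNIV"
    by (rule summable_on_comparison_test[OF M]) (use Bd[of t] r in auto)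
  then show "(\<lambda>n. c n * (of_nat (p n) * t ^ (p n - 1)) * w n) summable_on UNIV"
    by (rule abs_summable_summable)
qed

lemma exp_series_deriv_gen:
  fixes c :: "'i::countable \<Rightarrow> complex" and q :: "'i \<Rightarrow> int"
  assumes inf: "infinite (UNIV::'i set)" and t: "\<bar>Im t\<bar> < 1"
    and sm: "(\<lambda>n. norm (c n) * 3 ^ nat \<bar>q n\<bar>) summable_on UNIV"
  shows "((\<lambda>s. \<Sum>\<^sub>\<infinity>n. c n * exp (\<i> * s * of_int (q n))) has_field_derivative
            (\<Sum>\<^sub>\<infinity>n. c n * (\<i> * of_int (q n) * exp (\<i> * t * of_int (q n))))) (at t)"
proof -
  define S where "S = {s. \<bar>Im s\<bar> < 1}"
  have S: "open S" "convex S" "t \<in> S"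
  proof -
    have SI: "S = {s. Im s < 1} \<inter> {s. Im s > -1}" unfolding S_def by (auto simp: abs_less_iff)
    then show "open S" by (auto intro: open_Int open_halfspace_Im_lt open_halfspace_Im_gt)
    show "convex S" using SI by (auto intro: convex_Int convex_halfspace_Im_lt convex_halfspace_Im_gt)
    show "t \<in> S" using t by (simp add: S_def)
  qed
  have e3: "exp 1 < (3::real)" using e_less_272 by linarith
  obtain K where K: "\<And>n. real n * exp 1 ^ n \<le> K * 3 ^ n" using absorb[of "exp 1" 3] e3 by auto
  have ex: "norm (exp (\<i> * s * of_int k)) \<le> exp 1 ^ nat \<bar>k\<bar>" if "s \<in> S" for s k
  proof -
    have "norm (exp (\<i> * s * of_int k)) = exp (- Im s * of_int k)" by simp
    also have "\<dots> \<le> exp (of_int \<bar>k\<bar>)"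
    proof -
      have "\<bar>Im s\<bar> * \<bar>of_int k\<bar> \<le> 1 * \<bar>of_int k :: real\<bar>"
        using that unfolding S_def by (intro mult_right_mono) auto
      then have "\<bar>Im s * of_int k\<bar> \<le> of_int \<bar>k\<bar>" by (simp add: abs_mult)
      then have "- Im s * of_int k \<le> of_int \<bar>k\<bar>" by linarith
      then show ?thesis by simp
    qed
    also have "\<dots> = exp 1 ^ nat \<bar>k\<bar>"
      proof -
      have "(of_int \<bar>k\<bar> :: real) = of_nat (nat \<bar>k\<bar>) * 1" by simp
      then show ?thesis by (simp only: exp_of_nat_mult)
    qed
    finally show ?thesis .
  qed
  define M where "M n = K * (norm (c n) * 3 ^ nat \<bar>q n\<bar>)" for n
  have M: "M summable_on UNIV" unfolding M_def using sm by (rule summable_on_cmult_right)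
  have Bd: "norm (c n * (\<i> * of_int (q n) * exp (\<i> * s * of_int (q n)))) \<le> M n" if "s \<in> S" for n s
  proof -
    have "norm (c n * (\<i> * of_int (q n) * exp (\<i> * s * of_int (q n))))
        = norm (c n) * (real (nat \<bar>q n\<bar>) * norm (exp (\<i> * s * of_int (q n))))"
      by (simp add: norm_mult)
    also have "\<dots> \<le> norm (c n) * (real (nat \<bar>q n\<bar>) * exp 1 ^ nat \<bar>q n\<bar>)"
      by (intro mult_left_mono ex that) auto
    also have "\<dots> \<le> norm (c n) * (K * 3 ^ nat \<bar>q n\<bar>)"
      by (intro mult_left_mono K) auto
    finally show ?thesis by (simp add: M_def mult_ac)
  qed
  have D: "((\<lambda>s. c n * exp (\<i> * s * of_int (q n))) has_field_derivative (c n * (\<i> * of_int (q n) * exp (\<i> * s * of_int (q n))))) (at s)" for n s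
    by (auto intro!: derivative_eq_intros)
  have smt: "(\<lambda>n. c n * exp (\<i> * s * of_int (q n))) summable_on UNIV" if "s \<in> S" for s
  proof -
    have "(\<lambda>n. norm (c n * exp (\<i> * s * of_int (q n)))) summable_on UNIV"
    proof (rule summable_on_comparison_test[OF sm])
      fix n
      have "norm (c n * exp (\<i> * s * of_int (q n))) \<le> norm (c n) * exp 1 ^ nat \<bar>q n\<bar>"
        unfolding norm_mult by (intro mult_left_mono ex that) auto
      also have "\<dots> \<le> norm (c n) * 3 ^ nat \<bar>q n\<bar>"
        using e3 by (intro mult_left_mono power_mono) auto
      finally show "norm (c n * exp (\<i> * s * of_int (q n))) \<le> norm (c n) * 3 ^ nat \<bar>q n\<bar>" .
    qed auto
    then show ?thesis by (rule abs_summable_summable)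
  qed
  show ?thesis
    by (rule series_deriv[OF inf S(1,2,3) D Bd M smt])
qed

lemma powser_unique1:
  fixes a :: "nat \<Rightarrow> complex"
  assumes r: "0 < r" and z: "\<And>x. norm x < r \<Longrightarrow> ((\<lambda>n. a n * x ^ n) has_sum 0) UNIV"
  shows "a m = 0"
proof (rule ccontr)
  assume am: "a m \<noteq> 0"
  have sm: "\<And>x. norm (x - 0) < r \<Longrightarrow> (\<lambda>n. a n * (x - 0) ^ n) sums ((\<lambda>_. 0) x)"
    using z by (auto intro: has_sum_imp_sums)
  show False
  proof (cases "m = 0")
    case True
    from sm[of 0] r have "(\<lambda>n. a n * 0 ^ n) sums 0" by simp
    then have "(\<Sum>n. a n * 0 ^ n) = 0" by (simp add: sums_iff)
    then show False using am True by simp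
  next
    case False
    from False have mpos: "0 < m" by simp
    have f0: "(\<lambda>_. 0::complex) 0 = 0" by simp
    show False
    proof (rule powser_0_nonzero[OF r sm f0 am mpos])
      fix s :: real assume s1: "0 < s" and s2: "\<And>z::complex. z \<in> cball 0 s - {0} \<Longrightarrow> (\<lambda>_. 0::complex) z \<noteq> 0"
      show False using s2[of "complex_of_real s"] s1 by simp
    qed
  qed
qed

lemma unique_step:
  fixes d :: "nat \<Rightarrow> 'j \<Rightarrow> complex" and g :: "'j \<Rightarrow> complex"
  assumes r: "0 < r"
    and z: "\<And>z. norm z < r \<Longrightarrow> ((\<lambda>(i,m). d i m * z ^ i * g m) has_sum 0) UNIV"
  shows "((\<lambda>m. d i m * g m) has_sum 0) UNIV"
proof -
  define z0 :: complex where "z0 = of_real (r/2)"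
  have z0: "norm z0 < r" "z0 \<noteq> 0" using r by (auto simp: z0_def)
  have inner: "(\<lambda>m. d k m * g m) summable_on UNIV" for k
  proof -
    have h1: "(\<lambda>(i,m). d i m * z0 ^ i * g m) summable_on UNIV"
      using z[OF z0(1)] unfolding summable_on_def by blast
    have h2: "(\<lambda>(i,m). (\<lambda>i m. d i m * z0 ^ i * g m) i m) summable_on Sigma UNIV (\<lambda>_. UNIV)"
      using h1 by simp
    have h3: "(\<lambda>i m. d i m * z0 ^ i * g m) k summable_on UNIV"
      by (rule summable_on_SigmaD1[OF h2]) simp
    have e: "(\<lambda>m. d k m * z0 ^ k * g m) = (\<lambda>m. (d k m * g m) * z0 ^ k)"
      by (simp add: mult_ac)
    have "(\<lambda>m. (d k m * g m) * z0 ^ k) summable_on UNIV" using h3 e by simp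
    moreover have "z0 ^ k \<noteq> 0" using z0 by simp
    ultimately show ?thesis using summable_on_cmult_left' by blast
  qed
  define S where "S k = (\<Sum>\<^sub>\<infinity>m. d k m * g m)" for k
  have "((\<lambda>k. S k * z ^ k) has_sum 0) UNIV" if "norm z < r" for z
  proof -
    have "((\<lambda>k. S k * z ^ k) has_sum 0) UNIV"
    proof (rule has_sum_Sigma'[where f="\<lambda>(i,m). d i m * z ^ i * g m" and a=0 and A=UNIV and B="\<lambda>_. UNIV"])
      show "((\<lambda>(i, m). d i m * z ^ i * g m) has_sum 0) (UNIV \<times> UNIV)"
        using z[OF that] by simp
      fix k :: nat
      have "((\<lambda>m. d k m * g m) has_sum S k) UNIV" using inner[of k] by (simp add: S_def)
      then have "((\<lambda>m. d k m * g m * z ^ k) has_sum S k * z ^ k) UNIV" by (rule has_sum_cmult_left)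
      then show "((\<lambda>m. case (k, m) of (i, m) \<Rightarrow> d i m * z ^ i * g m) has_sum S k * z ^ k) UNIV"
        by (simp add: mult_ac)
    qed
    then show ?thesis .
  qed
  then have "S i = 0" using powser_unique1[OF r] by blast
  then show ?thesis using inner[of i] by (metis S_def has_sum_infsum)
qed

lemma unique4:
  fixes d :: "nat \<Rightarrow> nat \<Rightarrow> nat \<Rightarrow> nat \<Rightarrow> complex"
  assumes r: "0 < r"
    and z: "\<And>z1 z2 z3 z4. norm z1 < r \<Longrightarrow> norm z2 < r \<Longrightarrow> norm z3 < r \<Longrightarrow> norm z4 < r \<Longrightarrow>
       ((\<lambda>(i,j,k,l). d i j k l * z1 ^ i * z2 ^ j * z3 ^ k * z4 ^ l) has_sum 0) UNIV"
  shows "d i j k l = 0"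
proof -
  have s1: "((\<lambda>(j,k,l). d i j k l * z2 ^ j * z3 ^ k * z4 ^ l) has_sum 0) UNIV"
    if "norm z2 < r" "norm z3 < r" "norm z4 < r" for z2 z3 z4
  proof -
    define d' where "d' i m = (case m of (j,k,l) \<Rightarrow> d i j k l)" for i m
    define g where "g m = (case m of (j,k,l) \<Rightarrow> z2 ^ j * z3 ^ k * z4 ^ l)" for m
    have "((\<lambda>m. d' i m * g m) has_sum 0) UNIV"
    proof (rule unique_step[OF r])
      fix z :: complex assume "norm z < r"
      have e: "(\<lambda>(i, m). d' i m * z ^ i * g m) = (\<lambda>(i,j,k,l). d i j k l * z ^ i * z2 ^ j * z3 ^ k * z4 ^ l)"
        by (intro ext) (auto simp: d'_def g_def mult.assoc split: prod.splits)
      from z[OF \<open>norm z < r\<close> that] show "((\<lambda>(i, m). d' i m * z ^ i * g m) has_sum 0) UNIV"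
        by (simp only: e)
    qed
    moreover have "(\<lambda>m. d' i m * g m) = (\<lambda>(j,k,l). d i j k l * z2 ^ j * z3 ^ k * z4 ^ l)"
      by (intro ext) (auto simp: d'_def g_def mult.assoc split: prod.splits)
    ultimately show ?thesis by simp
  qed
  have s2: "((\<lambda>(k,l). d i j k l * z3 ^ k * z4 ^ l) has_sum 0) UNIV"
    if "norm z3 < r" "norm z4 < r" for z3 z4
  proof -
    define d' where "d' j m = (case m of (k,l) \<Rightarrow> d i j k l)" for j m
    define g where "g m = (case m of (k,l) \<Rightarrow> z3 ^ k * z4 ^ l)" for m
    have "((\<lambda>m. d' j m * g m) has_sum 0) UNIV"
    proof (rule unique_step[OF r])
      fix z :: complex assume "norm z < r"
      have e: "(\<lambda>(j, m). d' j m * z ^ j * g m) = (\<lambda>(j,k,l). d i j k l * z ^ j * z3 ^ k * z4 ^ l)"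
        by (intro ext) (auto simp: d'_def g_def mult.assoc split: prod.splits)
      from s1[OF \<open>norm z < r\<close> that] show "((\<lambda>(j, m). d' j m * z ^ j * g m) has_sum 0) UNIV"
        by (simp only: e)
    qed
    moreover have "(\<lambda>m. d' j m * g m) = (\<lambda>(k,l). d i j k l * z3 ^ k * z4 ^ l)"
      by (intro ext) (auto simp: d'_def g_def mult.assoc split: prod.splits)
    ultimately show ?thesis by simp
  qed
  have s3: "((\<lambda>l. d i j k l * z4 ^ l) has_sum 0) UNIV" if "norm z4 < r" for z4
  proof -
    have "((\<lambda>m. d i j k m * z4 ^ m) has_sum 0) UNIV"
    proof (rule unique_step[OF r, where d="\<lambda>k m. d i j k m"])
      fix z :: complex assume "norm z < r"
      from s2[OF this that] show "((\<lambda>(k, m). d i j k m * z ^ k * z4 ^ m) has_sum 0) UNIV" .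
    qed
    then show ?thesis .
  qed
  show ?thesis by (rule powser_unique1[OF r s3])
qed



abbreviation HS4 :: "real \<Rightarrow> (nat \<Rightarrow> nat \<Rightarrow> nat \<Rightarrow> nat \<Rightarrow> complex) \<Rightarrow> fn4 \<Rightarrow> bool" where
  "HS4 r c f \<equiv> (\<forall>z1 z2 z3 z4. norm z1 < r \<and> norm z2 < r \<and> norm z3 < r \<and> norm z4 < r \<longrightarrow>
       ((\<lambda>(i,j,k,l). c i j k l * z1 ^ i * z2 ^ j * z3 ^ k * z4 ^ l) has_sum f z1 z2 z3 z4) UNIV)"

lemma inf4: "infinite (UNIV :: (nat \<times> nat \<times> nat \<times> nat) set)"
  by (simp add: finite_prod)

lemma inf2: "infinite (UNIV :: (nat \<times> nat) set)"
  by (simp add: finite_prod)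

lemma HS4_abs:
  assumes HS: "HS4 r c f" and r: "0 \<le> \<rho>" "\<rho> < r"
  shows "(\<lambda>(i,j,k,l). norm (c i j k l) * \<rho> ^ (i+j+k+l)) summable_on UNIV"
proof -
  have "((\<lambda>(i,j,k,l). c i j k l * (of_real \<rho>) ^ i * (of_real \<rho>) ^ j * (of_real \<rho>) ^ k * (of_real \<rho>) ^ l)
          has_sum f \<rho> \<rho> \<rho> \<rho>) UNIV" using HS r by auto
  then have "(\<lambda>(i,j,k,l). c i j k l * (of_real \<rho>) ^ i * (of_real \<rho>) ^ j * (of_real \<rho>) ^ k * (of_real \<rho>) ^ l) summable_on UNIV"
    unfolding summable_on_def by blast
  then have "(\<lambda>n. norm ((\<lambda>(i,j,k,l). c i j k l * (of_real \<rho>) ^ i * (of_real \<rho>) ^ j * (of_real \<rho>) ^ k * (of_real \<rho>) ^ l :: complex) n)) summable_on UNIV"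
    using summable_on_iff_abs_summable_on_complex by blast
  moreover have "(\<lambda>n. norm ((\<lambda>(i,j,k,l). c i j k l * (of_real \<rho>) ^ i * (of_real \<rho>) ^ j * (of_real \<rho>) ^ k * (of_real \<rho>) ^ l :: complex) n))
     = (\<lambda>(i,j,k,l). norm (c i j k l) * \<rho> ^ (i+j+k+l))"
    using r by (intro ext) (auto simp: norm_mult norm_power power_add split: prod.splits)
  ultimately show ?thesis by simp
qed

lemma bound4:
  fixes a1 a2 a3 a4 :: real
  assumes "0 \<le> a1" "0 \<le> a2" "0 \<le> a3" "0 \<le> a4" "a1 \<le> \<rho>" "a2 \<le> \<rho>" "a3 \<le> \<rho>" "a4 \<le> \<rho>"
  shows "a1 ^ i * a2 ^ j * a3 ^ k * a4 ^ l \<le> \<rho> ^ (i+j+k+l)"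
proof -
  have r0: "0 \<le> \<rho>" using assms by linarith
  have "a1 ^ i * a2 ^ j * a3 ^ k * a4 ^ l \<le> \<rho> ^ i * \<rho> ^ j * \<rho> ^ k * \<rho> ^ l"
    using assms r0 by (intro mult_mono power_mono) (auto intro: mult_nonneg_nonneg)
  then show ?thesis by (simp add: power_add)
qed

lemma D1:
  assumes HS: "HS4 r c f" and z: "norm z1 < r" "norm z2 < r" "norm z3 < r" "norm z4 < r"
  shows "((\<lambda>t. f t z2 z3 z4) has_field_derivative
      (\<Sum>\<^sub>\<infinity>(i,j,k,l). c i j k l * (of_nat i * z1 ^ (i - 1)) * (z2 ^ j * z3 ^ k * z4 ^ l))) (at z1)"
    and "(\<lambda>(i,j,k,l). c i j k l * (of_nat i * z1 ^ (i - 1)) * (z2 ^ j * z3 ^ k * z4 ^ l)) summable_on UNIV"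
proof -
  define M where "M = max (max (norm z1) (norm z2)) (max (norm z3) (norm z4))"
  define \<rho> where "\<rho> = (M + r) / 2"
  have M0: "0 \<le> M" unfolding M_def by (simp add: le_max_iff_disj)
  have M: "M < r" "norm z1 \<le> M" "norm z2 \<le> M" "norm z3 \<le> M" "norm z4 \<le> M" "0 \<le> M"
    using z M0 unfolding M_def by auto
  have rho: "M < \<rho>" "\<rho> < r" using M unfolding \<rho>_def by argo+
  define cc where "cc n = (case n of (i,j,k,l) \<Rightarrow> c i j k l)" for n :: "nat \<times> nat \<times> nat \<times> nat"
  define p where "p n = (case n of (i,j,k,l) \<Rightarrow> i)" for n :: "nat \<times> nat \<times> nat \<times> nat"
  define w where "w n = (case n of (i,j,k,l) \<Rightarrow> z2 ^ j * z3 ^ k * z4 ^ l)" for n :: "nat \<times> nat \<times> nat \<times> nat"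
  have sm: "(\<lambda>n. norm (cc n * w n) * \<rho> ^ p n) summable_on UNIV"
  proof (rule summable_on_comparison_test[OF HS4_abs[OF HS _ rho(2)]])
    fix n :: "nat \<times> nat \<times> nat \<times> nat"
    obtain i j k l where n: "n = (i,j,k,l)" by (metis prod_cases4)
    have "norm (cc n * w n) * \<rho> ^ p n = norm (c i j k l) * (\<rho> ^ i * norm z2 ^ j * norm z3 ^ k * norm z4 ^ l)"
      by (simp add: n cc_def w_def p_def norm_mult norm_power mult_ac)
    also have "\<dots> \<le> norm (c i j k l) * \<rho> ^ (i+j+k+l)"
      by (intro mult_left_mono bound4) (use M rho in auto)
    finally show "norm (cc n * w n) * \<rho> ^ p n \<le> (\<lambda>(i,j,k,l). norm (c i j k l) * \<rho> ^ (i+j+k+l)) n"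
      by (simp add: n)
  qed (use M rho in auto)
  have z1r: "norm z1 < \<rho>" using M rho by auto
  note G = powser_deriv_gen[OF inf4 z1r sm]
  have fe: "f s z2 z3 z4 = (\<Sum>\<^sub>\<infinity>n. cc n * s ^ p n * w n)" if "s \<in> ball 0 r" for s
  proof -
    have "((\<lambda>(i,j,k,l). c i j k l * s ^ i * z2 ^ j * z3 ^ k * z4 ^ l) has_sum f s z2 z3 z4) UNIV"
      using HS that z by auto
    moreover have "(\<lambda>(i,j,k,l). c i j k l * s ^ i * z2 ^ j * z3 ^ k * z4 ^ l) = (\<lambda>n. cc n * s ^ p n * w n)"
      by (intro ext) (auto simp: cc_def p_def w_def mult.assoc split: prod.splits)
    ultimately show ?thesis by (simp add: infsumI)
  qed
  have de: "(\<lambda>n. cc n * (of_nat (p n) * z1 ^ (p n - 1)) * w n) =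
     (\<lambda>(i,j,k,l). c i j k l * (of_nat i * z1 ^ (i - 1)) * (z2 ^ j * z3 ^ k * z4 ^ l))"
    by (intro ext) (auto simp: cc_def p_def w_def split: prod.splits)
  show "(\<lambda>(i,j,k,l). c i j k l * (of_nat i * z1 ^ (i - 1)) * (z2 ^ j * z3 ^ k * z4 ^ l)) summable_on UNIV"
    using G(2) de by simp
  show "((\<lambda>t. f t z2 z3 z4) has_field_derivative
      (\<Sum>\<^sub>\<infinity>(i,j,k,l). c i j k l * (of_nat i * z1 ^ (i - 1)) * (z2 ^ j * z3 ^ k * z4 ^ l))) (at z1)"
    using has_field_derivative_transform_within_open[OF G(1) open_ball[of 0 r], of "\<lambda>t. f t z2 z3 z4"] fe z de
    by simp
qed

lemma D2:
  assumes HS: "HS4 r c f" and z: "norm z1 < r" "norm z2 < r" "norm z3 < r" "norm z4 < r"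
  shows "((\<lambda>t. f z1 t z3 z4) has_field_derivative
      (\<Sum>\<^sub>\<infinity>(i,j,k,l). c i j k l * (of_nat j * z2 ^ (j - 1)) * (z1 ^ i * z3 ^ k * z4 ^ l))) (at z2)"
    and "(\<lambda>(i,j,k,l). c i j k l * (of_nat j * z2 ^ (j - 1)) * (z1 ^ i * z3 ^ k * z4 ^ l)) summable_on UNIV"
proof -
  define M where "M = max (max (norm z1) (norm z2)) (max (norm z3) (norm z4))"
  define \<rho> where "\<rho> = (M + r) / 2"
  have M0: "0 \<le> M" unfolding M_def by (simp add: le_max_iff_disj)
  have M: "M < r" "norm z1 \<le> M" "norm z2 \<le> M" "norm z3 \<le> M" "norm z4 \<le> M" "0 \<le> M"
    using z M0 unfolding M_def by auto
  have rho: "M < \<rho>" "\<rho> < r" using M unfolding \<rho>_def by argo+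
  define cc where "cc n = (case n of (i,j,k,l) \<Rightarrow> c i j k l)" for n :: "nat \<times> nat \<times> nat \<times> nat"
  define p where "p n = (case n of (i,j,k,l) \<Rightarrow> j)" for n :: "nat \<times> nat \<times> nat \<times> nat"
  define w where "w n = (case n of (i,j,k,l) \<Rightarrow> z1 ^ i * z3 ^ k * z4 ^ l)" for n :: "nat \<times> nat \<times> nat \<times> nat"
  have sm: "(\<lambda>n. norm (cc n * w n) * \<rho> ^ p n) summable_on UNIV"
  proof (rule summable_on_comparison_test[OF HS4_abs[OF HS _ rho(2)]])
    fix n :: "nat \<times> nat \<times> nat \<times> nat"
    obtain i j k l where n: "n = (i,j,k,l)" by (metis prod_cases4)
    have "norm (cc n * w n) * \<rho> ^ p n = norm (c i j k l) * (norm z1 ^ i * \<rho> ^ j * norm z3 ^ k * norm z4 ^ l)"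
      by (simp add: n cc_def w_def p_def norm_mult norm_power mult_ac)
    also have "\<dots> \<le> norm (c i j k l) * \<rho> ^ (i+j+k+l)"
      by (intro mult_left_mono bound4) (use M rho in auto)
    finally show "norm (cc n * w n) * \<rho> ^ p n \<le> (\<lambda>(i,j,k,l). norm (c i j k l) * \<rho> ^ (i+j+k+l)) n"
      by (simp add: n)
  qed (use M rho in auto)
  have z1r: "norm z2 < \<rho>" using M rho by auto
  note G = powser_deriv_gen[OF inf4 z1r sm]
  have fe: "f z1 s z3 z4 = (\<Sum>\<^sub>\<infinity>n. cc n * s ^ p n * w n)" if "s \<in> ball 0 r" for s
  proof -
    have "((\<lambda>(i,j,k,l). c i j k l * z1 ^ i * s ^ j * z3 ^ k * z4 ^ l) has_sum f z1 s z3 z4) UNIV"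
      using HS that z by auto
    moreover have "(\<lambda>(i,j,k,l). c i j k l * z1 ^ i * s ^ j * z3 ^ k * z4 ^ l) = (\<lambda>n. cc n * s ^ p n * w n)"
      by (intro ext) (auto simp: cc_def p_def w_def mult_ac split: prod.splits)
    ultimately show ?thesis by (simp add: infsumI)
  qed
  have de: "(\<lambda>n. cc n * (of_nat (p n) * z2 ^ (p n - 1)) * w n) =
     (\<lambda>(i,j,k,l). c i j k l * (of_nat j * z2 ^ (j - 1)) * (z1 ^ i * z3 ^ k * z4 ^ l))"
    by (intro ext) (auto simp: cc_def p_def w_def split: prod.splits)
  show "(\<lambda>(i,j,k,l). c i j k l * (of_nat j * z2 ^ (j - 1)) * (z1 ^ i * z3 ^ k * z4 ^ l)) summable_on UNIV"
    using G(2) de by simp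
  show "((\<lambda>t. f z1 t z3 z4) has_field_derivative
      (\<Sum>\<^sub>\<infinity>(i,j,k,l). c i j k l * (of_nat j * z2 ^ (j - 1)) * (z1 ^ i * z3 ^ k * z4 ^ l))) (at z2)"
    using has_field_derivative_transform_within_open[OF G(1) open_ball[of 0 r], of "\<lambda>t. f z1 t z3 z4"] fe z de
    by simp
qed

lemma D3:
  assumes HS: "HS4 r c f" and z: "norm z1 < r" "norm z2 < r" "norm z3 < r" "norm z4 < r"
  shows "((\<lambda>t. f z1 z2 t z4) has_field_derivative
      (\<Sum>\<^sub>\<infinity>(i,j,k,l). c i j k l * (of_nat k * z3 ^ (k - 1)) * (z1 ^ i * z2 ^ j * z4 ^ l))) (at z3)"
    and "(\<lambda>(i,j,k,l). c i j k l * (of_nat k * z3 ^ (k - 1)) * (z1 ^ i * z2 ^ j * z4 ^ l)) summable_on UNIV"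
proof -
  define M where "M = max (max (norm z1) (norm z2)) (max (norm z3) (norm z4))"
  define \<rho> where "\<rho> = (M + r) / 2"
  have M0: "0 \<le> M" unfolding M_def by (simp add: le_max_iff_disj)
  have M: "M < r" "norm z1 \<le> M" "norm z2 \<le> M" "norm z3 \<le> M" "norm z4 \<le> M" "0 \<le> M"
    using z M0 unfolding M_def by auto
  have rho: "M < \<rho>" "\<rho> < r" using M unfolding \<rho>_def by argo+
  define cc where "cc n = (case n of (i,j,k,l) \<Rightarrow> c i j k l)" for n :: "nat \<times> nat \<times> nat \<times> nat"
  define p where "p n = (case n of (i,j,k,l) \<Rightarrow> k)" for n :: "nat \<times> nat \<times> nat \<times> nat"
  define w where "w n = (case n of (i,j,k,l) \<Rightarrow> z1 ^ i * z2 ^ j * z4 ^ l)" for n :: "nat \<times> nat \<times> nat \<times> nat"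
  have sm: "(\<lambda>n. norm (cc n * w n) * \<rho> ^ p n) summable_on UNIV"
  proof (rule summable_on_comparison_test[OF HS4_abs[OF HS _ rho(2)]])
    fix n :: "nat \<times> nat \<times> nat \<times> nat"
    obtain i j k l where n: "n = (i,j,k,l)" by (metis prod_cases4)
    have "norm (cc n * w n) * \<rho> ^ p n = norm (c i j k l) * (norm z1 ^ i * norm z2 ^ j * \<rho> ^ k * norm z4 ^ l)"
      by (simp add: n cc_def w_def p_def norm_mult norm_power mult_ac)
    also have "\<dots> \<le> norm (c i j k l) * \<rho> ^ (i+j+k+l)"
      by (intro mult_left_mono bound4) (use M rho in auto)
    finally show "norm (cc n * w n) * \<rho> ^ p n \<le> (\<lambda>(i,j,k,l). norm (c i j k l) * \<rho> ^ (i+j+k+l)) n"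
      by (simp add: n)
  qed (use M rho in auto)
  have z1r: "norm z3 < \<rho>" using M rho by auto
  note G = powser_deriv_gen[OF inf4 z1r sm]
  have fe: "f z1 z2 s z4 = (\<Sum>\<^sub>\<infinity>n. cc n * s ^ p n * w n)" if "s \<in> ball 0 r" for s
  proof -
    have "((\<lambda>(i,j,k,l). c i j k l * z1 ^ i * z2 ^ j * s ^ k * z4 ^ l) has_sum f z1 z2 s z4) UNIV"
      using HS that z by auto
    moreover have "(\<lambda>(i,j,k,l). c i j k l * z1 ^ i * z2 ^ j * s ^ k * z4 ^ l) = (\<lambda>n. cc n * s ^ p n * w n)"
      by (intro ext) (auto simp: cc_def p_def w_def mult_ac split: prod.splits)
    ultimately show ?thesis by (simp add: infsumI)
  qed
  have de: "(\<lambda>n. cc n * (of_nat (p n) * z3 ^ (p n - 1)) * w n) =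
     (\<lambda>(i,j,k,l). c i j k l * (of_nat k * z3 ^ (k - 1)) * (z1 ^ i * z2 ^ j * z4 ^ l))"
    by (intro ext) (auto simp: cc_def p_def w_def split: prod.splits)
  show "(\<lambda>(i,j,k,l). c i j k l * (of_nat k * z3 ^ (k - 1)) * (z1 ^ i * z2 ^ j * z4 ^ l)) summable_on UNIV"
    using G(2) de by simp
  show "((\<lambda>t. f z1 z2 t z4) has_field_derivative
      (\<Sum>\<^sub>\<infinity>(i,j,k,l). c i j k l * (of_nat k * z3 ^ (k - 1)) * (z1 ^ i * z2 ^ j * z4 ^ l))) (at z3)"
    using has_field_derivative_transform_within_open[OF G(1) open_ball[of 0 r], of "\<lambda>t. f z1 z2 t z4"] fe z de
    by simp
qed



lemma powid: "(x::complex) * (of_nat i * x ^ (i - 1)) = of_nat i * x ^ i"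
  by (cases i) auto

lemma expid:
  "(exp (\<i> * s) * u1) ^ i * (exp (- (\<i> * s)) * u2) ^ j = u1 ^ i * u2 ^ j * exp (\<i> * s * of_int (int i - int j))"
proof -
  have "(exp (\<i> * s) * u1) ^ i * (exp (- (\<i> * s)) * u2) ^ j
      = u1 ^ i * u2 ^ j * (exp (of_nat i * (\<i> * s)) * exp (of_nat j * (- (\<i> * s))))"
  proof -
    have a: "exp (\<i> * s) ^ i = exp (of_nat i * (\<i> * s))" by (rule exp_of_nat_mult[symmetric])
    have b: "exp (- (\<i> * s)) ^ j = exp (of_nat j * (- (\<i> * s)))" by (rule exp_of_nat_mult[symmetric])
    show ?thesis unfolding power_mult_distrib a b by (simp only: mult_ac)
  qed
  also have "exp (of_nat i * (\<i> * s)) * exp (of_nat j * (- (\<i> * s))) = exp (\<i> * s * of_int (int i - int j))"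
    by (simp add: exp_add[symmetric] algebra_simps)
  finally show ?thesis .
qed

lemma norm_exp_strip:
  assumes "\<bar>Im s\<bar> < 1"
  shows "norm (exp (\<i> * s)) < 3" "norm (exp (- (\<i> * s))) < 3"
proof -
  have e3: "exp 1 < (3::real)" using e_less_272 by linarith
  have a: "exp (- Im s) < exp 1" "exp (Im s) < exp 1" using assms by auto
  have "exp (- Im s) < 3" "exp (Im s) < 3" using a e3 by linarith+
  then show "norm (exp (\<i> * s)) < 3" "norm (exp (- (\<i> * s))) < 3" by auto
qed

lemma flow:
  assumes HS: "HS4 r c f" and u: "3 * norm u1 < r" "3 * norm u2 < r" "norm z3 < r" "norm z4 < r"
    and t: "\<bar>Im t\<bar> < 1"
  shows "((\<lambda>s. f (exp (\<i> * s) * u1) (exp (-(\<i> * s)) * u2) z3 z4) has_field_derivative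
      \<i> * (exp (\<i> * t) * u1 * d_u1 f (exp (\<i> * t) * u1) (exp (-(\<i> * t)) * u2) z3 z4
         - exp (-(\<i> * t)) * u2 * d_u2 f (exp (\<i> * t) * u1) (exp (-(\<i> * t)) * u2) z3 z4)) (at t)"
proof -
  define S where "S = {s. \<bar>Im s\<bar> < 1}"
  have SI: "S = {s. Im s < 1} \<inter> {s. Im s > -1}" unfolding S_def by (auto simp: abs_less_iff)
  have So: "open S" using SI by (auto intro: open_Int open_halfspace_Im_lt open_halfspace_Im_gt)
  have inP: "norm (exp (\<i> * s) * u1) < r" "norm (exp (-(\<i> * s)) * u2) < r" if "\<bar>Im s\<bar> < 1" for s
  proof -
    have "norm (exp (\<i> * s) * u1) \<le> 3 * norm u1"
      unfolding norm_mult using norm_exp_strip[OF that] by (intro mult_right_mono) auto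
    then show "norm (exp (\<i> * s) * u1) < r" using u by linarith
    have "norm (exp (-(\<i> * s)) * u2) \<le> 3 * norm u2"
      unfolding norm_mult using norm_exp_strip[OF that] by (intro mult_right_mono) auto
    then show "norm (exp (-(\<i> * s)) * u2) < r" using u by linarith
  qed
  define \<rho> where "\<rho> = max (max (3 * norm u1) (3 * norm u2)) (max (norm z3) (norm z4))"
  have rho: "\<rho> < r" "3 * norm u1 \<le> \<rho>" "3 * norm u2 \<le> \<rho>" "norm z3 \<le> \<rho>" "norm z4 \<le> \<rho>" "0 \<le> \<rho>"
    using u unfolding \<rho>_def by (auto simp: le_max_iff_disj)
  define cc where "cc n = (case n of (i,j,k,l) \<Rightarrow> c i j k l * u1 ^ i * u2 ^ j * z3 ^ k * z4 ^ l)"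
    for n :: "nat \<times> nat \<times> nat \<times> nat"
  define q where "q n = (case n of (i,j,k,l) \<Rightarrow> int i - int j)" for n :: "nat \<times> nat \<times> nat \<times> nat"
  have sm: "(\<lambda>n. norm (cc n) * 3 ^ nat \<bar>q n\<bar>) summable_on UNIV"
  proof (rule summable_on_comparison_test[OF HS4_abs[OF HS rho(6) rho(1)]])
    fix n :: "nat \<times> nat \<times> nat \<times> nat"
    obtain i j k l where n: "n = (i,j,k,l)" by (metis prod_cases4)
    have q3: "(3::real) ^ nat \<bar>q n\<bar> \<le> 3 ^ i * 3 ^ j"
      unfolding power_add[symmetric] by (rule power_increasing) (auto simp: n q_def)
    have "norm (cc n) * 3 ^ nat \<bar>q n\<bar> \<le> norm (cc n) * (3 ^ i * 3 ^ j)"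
      by (intro mult_left_mono q3) auto
    also have "\<dots> = norm (c i j k l) * ((3 * norm u1) ^ i * (3 * norm u2) ^ j * norm z3 ^ k * norm z4 ^ l)"
      by (simp add: n cc_def norm_mult norm_power power_mult_distrib mult_ac)
    also have "\<dots> \<le> norm (c i j k l) * \<rho> ^ (i+j+k+l)"
      by (intro mult_left_mono bound4) (use rho in auto)
    finally show "norm (cc n) * 3 ^ nat \<bar>q n\<bar> \<le> (\<lambda>(i,j,k,l). norm (c i j k l) * \<rho> ^ (i+j+k+l)) n"
      by (simp add: n)
  qed auto
  note G = exp_series_deriv_gen[OF inf4 t sm]
  have fe: "f (exp (\<i> * s) * u1) (exp (-(\<i> * s)) * u2) z3 z4 = (\<Sum>\<^sub>\<infinity>n. cc n * exp (\<i> * s * of_int (q n)))"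
    if "s \<in> S" for s
  proof -
    have s: "\<bar>Im s\<bar> < 1" using that by (simp add: S_def)
    have "((\<lambda>(i,j,k,l). c i j k l * (exp (\<i> * s) * u1) ^ i * (exp (-(\<i> * s)) * u2) ^ j * z3 ^ k * z4 ^ l)
       has_sum f (exp (\<i> * s) * u1) (exp (-(\<i> * s)) * u2) z3 z4) UNIV"
      using HS inP[OF s] u by auto
    moreover have "(\<lambda>(i,j,k,l). c i j k l * (exp (\<i> * s) * u1) ^ i * (exp (-(\<i> * s)) * u2) ^ j * z3 ^ k * z4 ^ l)
        = (\<lambda>n. cc n * exp (\<i> * s * of_int (q n)))"
    proof (intro ext)
      fix n :: "nat \<times> nat \<times> nat \<times> nat"
      obtain i j k l where n: "n = (i,j,k,l)" by (metis prod_cases4)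
      have "c i j k l * (exp (\<i> * s) * u1) ^ i * (exp (-(\<i> * s)) * u2) ^ j * z3 ^ k * z4 ^ l
          = c i j k l * ((exp (\<i> * s) * u1) ^ i * (exp (-(\<i> * s)) * u2) ^ j) * z3 ^ k * z4 ^ l"
        by (simp add: mult_ac)
      also have "\<dots> = cc n * exp (\<i> * s * of_int (q n))"
        unfolding expid by (simp add: n cc_def q_def mult_ac)
      finally show "(\<lambda>(i,j,k,l). c i j k l * (exp (\<i> * s) * u1) ^ i * (exp (-(\<i> * s)) * u2) ^ j * z3 ^ k * z4 ^ l) n
          = cc n * exp (\<i> * s * of_int (q n))" by (simp add: n)
    qed
    ultimately show ?thesis by (simp add: infsumI)
  qed
  define P1 where "P1 = exp (\<i> * t) * u1"
  define P2 where "P2 = exp (-(\<i> * t)) * u2"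
  have Pr: "norm P1 < r" "norm P2 < r" using inP[OF t] by (auto simp: P1_def P2_def)
  note A1 = D1[OF HS Pr u(3,4)]
  note A2 = D2[OF HS Pr u(3,4)]
  have d1: "d_u1 f P1 P2 z3 z4 = (\<Sum>\<^sub>\<infinity>(i,j,k,l). c i j k l * (of_nat i * P1 ^ (i - 1)) * (P2 ^ j * z3 ^ k * z4 ^ l))"
    unfolding d_u1_def by (rule DERIV_imp_deriv[OF A1(1)])
  have d2: "d_u2 f P1 P2 z3 z4 = (\<Sum>\<^sub>\<infinity>(i,j,k,l). c i j k l * (of_nat j * P2 ^ (j - 1)) * (P1 ^ i * z3 ^ k * z4 ^ l))"
    unfolding d_u2_def by (rule DERIV_imp_deriv[OF A2(1)])
  define a1 where "a1 = (\<lambda>(i,j,k,l). c i j k l * (of_nat i * P1 ^ (i - 1)) * (P2 ^ j * z3 ^ k * z4 ^ l))"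
  define a2 where "a2 = (\<lambda>(i,j,k,l). c i j k l * (of_nat j * P2 ^ (j - 1)) * (P1 ^ i * z3 ^ k * z4 ^ l))"
  have h1: "(a1 has_sum d_u1 f P1 P2 z3 z4) UNIV" using A1(2) d1 unfolding a1_def by auto
  have h2: "(a2 has_sum d_u2 f P1 P2 z3 z4) UNIV" using A2(2) d2 unfolding a2_def by auto
  have h3: "((\<lambda>n. \<i> * (P1 * a1 n) + \<i> * (- (P2 * a2 n))) has_sum
      (\<i> * (P1 * d_u1 f P1 P2 z3 z4) + \<i> * (- (P2 * d_u2 f P1 P2 z3 z4)))) UNIV"
  proof -
    have "((\<lambda>n. P2 * a2 n) has_sum - (- (P2 * d_u2 f P1 P2 z3 z4))) UNIV"
      using has_sum_cmult_right[OF h2] by simp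
    then have "((\<lambda>n. - (P2 * a2 n)) has_sum (- (P2 * d_u2 f P1 P2 z3 z4))) UNIV"
      by (subst has_sum_uminus)
    then show ?thesis by (intro has_sum_add has_sum_cmult_right h1)
  qed
  have tw: "\<i> * (P1 * a1 n) + \<i> * (- (P2 * a2 n)) = cc n * (\<i> * of_int (q n) * exp (\<i> * t * of_int (q n)))" for n
  proof -
    obtain i j k l where n: "n = (i,j,k,l)" by (metis prod_cases4)
    have e1: "P1 * a1 n = of_nat i * (c i j k l * (P1 ^ i * P2 ^ j) * z3 ^ k * z4 ^ l)"
    proof -
      have "P1 * a1 n = c i j k l * (P1 * (of_nat i * P1 ^ (i - 1))) * (P2 ^ j * z3 ^ k * z4 ^ l)"
        by (simp add: n a1_def mult_ac)
      then show ?thesis unfolding powid by (simp add: mult_ac)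
    qed
    have e2: "P2 * a2 n = of_nat j * (c i j k l * (P1 ^ i * P2 ^ j) * z3 ^ k * z4 ^ l)"
    proof -
      have "P2 * a2 n = c i j k l * (P2 * (of_nat j * P2 ^ (j - 1))) * (P1 ^ i * z3 ^ k * z4 ^ l)"
        by (simp add: n a2_def mult_ac)
      then show ?thesis unfolding powid by (simp add: mult_ac)
    qed
    have e3: "P1 ^ i * P2 ^ j = u1 ^ i * u2 ^ j * exp (\<i> * t * of_int (q n))"
      unfolding P1_def P2_def expid by (simp add: n q_def)
    show ?thesis unfolding e1 e2 e3
      by (simp add: n cc_def q_def algebra_simps)
  qed
  have val: "(\<Sum>\<^sub>\<infinity>n. cc n * (\<i> * of_int (q n) * exp (\<i> * t * of_int (q n))))
       = \<i> * (P1 * d_u1 f P1 P2 z3 z4 - P2 * d_u2 f P1 P2 z3 z4)"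
    using infsumI[OF h3] tw by (simp add: algebra_simps)
  have tS: "t \<in> S" using t by (simp add: S_def)
  show ?thesis
    using has_field_derivative_transform_within_open[OF G So tS, of "\<lambda>s. f (exp (\<i> * s) * u1) (exp (-(\<i> * s)) * u2) z3 z4"] fe val
    by (simp add: P1_def P2_def)
qed



abbreviation HS2 :: "real \<Rightarrow> (nat \<Rightarrow> nat \<Rightarrow> complex) \<Rightarrow> (complex \<Rightarrow> complex \<Rightarrow> complex) \<Rightarrow> bool" where
  "HS2 r c f \<equiv> (\<forall>z1 z2. norm z1 < r \<and> norm z2 < r \<longrightarrow>
       ((\<lambda>(i,j). c i j * z1 ^ i * z2 ^ j) has_sum f z1 z2) UNIV)"

lemma HS2_abs:
  assumes HS: "HS2 r c f" and r: "0 \<le> \<rho>" "\<rho> < r"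
  shows "(\<lambda>(i,j). norm (c i j) * \<rho> ^ (i+j)) summable_on UNIV"
proof -
  have "((\<lambda>(i,j). c i j * (of_real \<rho>) ^ i * (of_real \<rho>) ^ j) has_sum f \<rho> \<rho>) UNIV" using HS r by auto
  then have "(\<lambda>(i,j). c i j * (of_real \<rho>) ^ i * (of_real \<rho>) ^ j) summable_on UNIV"
    unfolding summable_on_def by blast
  then have "(\<lambda>n. norm ((\<lambda>(i,j). c i j * (of_real \<rho>) ^ i * (of_real \<rho>) ^ j :: complex) n)) summable_on UNIV"
    using summable_on_iff_abs_summable_on_complex by blast
  moreover have "(\<lambda>n. norm ((\<lambda>(i,j). c i j * (of_real \<rho>) ^ i * (of_real \<rho>) ^ j :: complex) n))
     = (\<lambda>(i,j). norm (c i j) * \<rho> ^ (i+j))"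
    using r by (intro ext) (auto simp: norm_mult norm_power power_add split: prod.splits)
  ultimately show ?thesis by simp
qed

lemma D2v:
  assumes HS: "HS2 r c f" and z: "norm z1 < r" "norm z2 < r"
  shows "((\<lambda>t. f t z2) has_field_derivative
      (\<Sum>\<^sub>\<infinity>(i,j). c i j * (of_nat i * z1 ^ (i - 1)) * z2 ^ j)) (at z1)"
proof -
  define M where "M = max (norm z1) (norm z2)"
  define \<rho> where "\<rho> = (M + r) / 2"
  have M0: "0 \<le> M" unfolding M_def by (simp add: le_max_iff_disj)
  have M: "M < r" "norm z1 \<le> M" "norm z2 \<le> M"
    using z unfolding M_def by auto
  have rho: "M < \<rho>" "\<rho> < r" using M unfolding \<rho>_def by argo+
  define cc where "cc n = (case n of (i,j) \<Rightarrow> c i j)" for n :: "nat \<times> nat"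
  define p where "p n = (case n of (i,j) \<Rightarrow> i)" for n :: "nat \<times> nat"
  define w where "w n = (case n of (i,j) \<Rightarrow> z2 ^ j)" for n :: "nat \<times> nat"
  have sm: "(\<lambda>n. norm (cc n * w n) * \<rho> ^ p n) summable_on UNIV"
  proof (rule summable_on_comparison_test[OF HS2_abs[OF HS _ rho(2)]])
    fix n :: "nat \<times> nat"
    obtain i j where n: "n = (i,j)" by (metis prod.exhaust)
    have "norm (cc n * w n) * \<rho> ^ p n = norm (c i j) * (\<rho> ^ i * norm z2 ^ j)"
      by (simp add: n cc_def w_def p_def norm_mult norm_power mult_ac)
    also have "\<dots> \<le> norm (c i j) * (\<rho> ^ i * \<rho> ^ j)"
      by (intro mult_left_mono mult_left_mono power_mono) (use M M0 rho in auto)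
    finally show "norm (cc n * w n) * \<rho> ^ p n \<le> (\<lambda>(i,j). norm (c i j) * \<rho> ^ (i+j)) n"
      by (simp add: n power_add)
  qed (use M0 rho in auto)
  have z1r: "norm z1 < \<rho>" using M rho by auto
  note G = powser_deriv_gen[OF inf2 z1r sm]
  have fe: "f s z2 = (\<Sum>\<^sub>\<infinity>n. cc n * s ^ p n * w n)" if "s \<in> ball 0 r" for s
  proof -
    have "((\<lambda>(i,j). c i j * s ^ i * z2 ^ j) has_sum f s z2) UNIV"
      using HS that z by auto
    moreover have "(\<lambda>(i,j). c i j * s ^ i * z2 ^ j) = (\<lambda>n. cc n * s ^ p n * w n)"
      by (intro ext) (auto simp: cc_def p_def w_def split: prod.splits)
    ultimately show ?thesis by (simp add: infsumI)
  qed
  have de: "(\<lambda>n. cc n * (of_nat (p n) * z1 ^ (p n - 1)) * w n) =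
     (\<lambda>(i,j). c i j * (of_nat i * z1 ^ (i - 1)) * z2 ^ j)"
    by (intro ext) (auto simp: cc_def p_def w_def split: prod.splits)
  show ?thesis
    using has_field_derivative_transform_within_open[OF G(1) open_ball[of 0 r], of "\<lambda>t. f t z2"] fe z de
    by simp
qed

lemma HS2_at0:
  assumes HS: "HS2 r c f" and r: "0 < r"
  shows "f 0 0 = c 0 0"
proof -
  have "((\<lambda>(i,j). c i j * 0 ^ i * 0 ^ j) has_sum f 0 0) UNIV" using HS r by auto
  moreover have "((\<lambda>(i,j). c i j * (0::complex) ^ i * 0 ^ j) has_sum c 0 0) UNIV"
    by (rule has_sum_finite_neutralI[where B="{(0,0)}"]) (auto split: prod.splits)
  ultimately show ?thesis using has_sum_unique by blast
qed

lemma HS2_nonzero: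
  assumes HS: "HS2 r c f" and r: "0 < r" and nz: "f 0 0 \<noteq> 0"
  shows "\<exists>\<delta>>0. \<forall>h e. norm h < \<delta> \<and> norm e < \<delta> \<longrightarrow> f h e \<noteq> 0"
proof -
  define \<rho> where "\<rho> = r / 2"
  have rho: "0 < \<rho>" "\<rho> < r" using r by (auto simp: \<rho>_def)
  define N where "N = (\<Sum>\<^sub>\<infinity>(i,j). norm (c i j) * \<rho> ^ (i+j))"
  note sN = HS2_abs[OF HS less_imp_le[OF rho(1)] rho(2)]
  have N0: "0 \<le> N" unfolding N_def by (rule infsum_nonneg) (use rho in \<open>auto split: prod.splits\<close>)
  have c00: "c 0 0 = f 0 0" using HS2_at0[OF HS r] by simp
  define \<delta> where "\<delta> = min \<rho> (\<rho> * norm (c 0 0) / (2 * (N + 1)))"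
  have d0: "0 < \<delta>" using rho nz c00 N0 by (auto simp: \<delta>_def)
  have dr: "\<delta> \<le> \<rho>" by (simp add: \<delta>_def)
  have dN: "\<delta> / \<rho> * N < norm (c 0 0)"
  proof -
    have "\<delta> \<le> \<rho> * norm (c 0 0) / (2 * (N + 1))" by (simp add: \<delta>_def)
    then have "\<delta> / \<rho> \<le> norm (c 0 0) / (2 * (N + 1))" using rho by (simp add: field_simps)
    then have "\<delta> / \<rho> * N \<le> norm (c 0 0) / (2 * (N + 1)) * N" using N0 by (rule mult_right_mono)
    also have "\<dots> < norm (c 0 0)"
    proof -
      have p: "0 < norm (f 0 0)" using nz by simp
      have "0 < N * norm (f 0 0) + 2 * norm (f 0 0)" using p N0 by (intro add_nonneg_pos) auto
      then show ?thesis using N0 nz c00 by (simp add: field_simps)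
    qed
    finally show ?thesis .
  qed
  show ?thesis
  proof (intro exI[of _ \<delta>] conjI allI impI d0)
    fix h e :: complex assume he: "norm h < \<delta> \<and> norm e < \<delta>"
    define d where "d = (\<lambda>(i,j). if (i,j) = (0,0) then 0 else c i j * h ^ i * e ^ j)"
    have full: "((\<lambda>(i,j). c i j * h ^ i * e ^ j) has_sum f h e) UNIV" using HS he dr rho by auto
    have single: "((\<lambda>n. if n = (0,0) then c 0 0 else 0) has_sum c 0 0) UNIV"
      by (rule has_sum_finite_neutralI[where B="{(0,0)}"]) auto
    have "((\<lambda>n. (\<lambda>(i,j). c i j * h ^ i * e ^ j) n + - (if n = (0,0) then c 0 0 else 0)) has_sum (f h e + - c 0 0)) UNIV"
      using single by (intro has_sum_add full) (simp add: has_sum_uminus)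
    moreover have "(\<lambda>n. (\<lambda>(i,j). c i j * h ^ i * e ^ j) n + - (if n = (0,0) then c 0 0 else 0)) = d"
      by (intro ext) (auto simp: d_def split: prod.splits)
    ultimately have hd: "(d has_sum (f h e - c 0 0)) UNIV" by simp
    have bd: "norm (d n) \<le> \<delta> / \<rho> * (\<lambda>(i,j). norm (c i j) * \<rho> ^ (i+j)) n" for n
    proof -
      obtain i j where n: "n = (i,j)" by (metis prod.exhaust)
      show ?thesis
      proof (cases "(i,j) = (0,0)")
        case True then show ?thesis using d0 rho by (simp add: n d_def)
      next
        case False
        then have ij: "i + j \<ge> 1" by auto
        obtain m where m: "i + j = Suc m" using ij by (cases "i + j") auto
        have "norm h ^ i * norm e ^ j \<le> \<delta> ^ i * \<delta> ^ j"
          using he d0 by (intro mult_mono power_mono) auto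
        also have "\<dots> = \<delta> ^ (i + j)" by (simp add: power_add)
        also have "\<dots> = \<delta> * \<delta> ^ m" by (simp add: m)
        also have "\<dots> \<le> \<delta> * \<rho> ^ m" using d0 dr by (intro mult_left_mono power_mono) auto
        also have "\<dots> = \<delta> / \<rho> * \<rho> ^ (i + j)" using rho by (simp add: m)
        finally have "norm h ^ i * norm e ^ j \<le> \<delta> / \<rho> * \<rho> ^ (i + j)" .
        then have "norm (c i j) * (norm h ^ i * norm e ^ j) \<le> norm (c i j) * (\<delta> / \<rho> * \<rho> ^ (i + j))"
          by (rule mult_left_mono) auto
        then show ?thesis using False by (auto simp: n d_def norm_mult norm_power mult_ac)
      qed
    qed
    have sd: "(\<lambda>n. norm (d n)) summable_on UNIV"
      by (rule summable_on_comparison_test[OF summable_on_cmult_right[OF sN, of "\<delta>/\<rho>"]]) (use bd in auto)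
    have "norm (f h e - c 0 0) = norm (infsum d UNIV)" using hd by (simp add: infsumI)
    also have "\<dots> \<le> (\<Sum>\<^sub>\<infinity>n. norm (d n))" by (rule norm_infsum_bound) (use sd in simp)
    also have "\<dots> \<le> (\<Sum>\<^sub>\<infinity>n. \<delta> / \<rho> * (\<lambda>(i,j). norm (c i j) * \<rho> ^ (i+j)) n)"
      by (rule infsum_mono[OF sd summable_on_cmult_right[OF sN]]) (use bd in auto)
    also have "\<dots> = \<delta> / \<rho> * N" unfolding N_def by (rule infsum_cmult_right') 
    finally have "norm (f h e - c 0 0) < norm (c 0 0)" using dN by linarith
    then show "f h e \<noteq> 0" by auto
  qed
qed



lemma strip_open_convex:
  shows "open {s. \<bar>Im s\<bar> < 1}" "convex {s. \<bar>Im s\<bar> < 1}"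
proof -
  have SI: "{s. \<bar>Im s\<bar> < 1} = {s. Im s < 1} \<inter> {s. Im s > -1}" by (auto simp: abs_less_iff)
  show "open {s. \<bar>Im s\<bar> < 1}" unfolding SI by (auto intro: open_Int open_halfspace_Im_lt open_halfspace_Im_gt)
  show "convex {s. \<bar>Im s\<bar> < 1}" unfolding SI by (auto intro: convex_Int convex_halfspace_Im_lt convex_halfspace_Im_gt)
qed

lemma flow_pt_bound:
  assumes "\<bar>Im s\<bar> < 1"
  shows "norm (exp (\<i> * s) * u1) \<le> 3 * norm u1" "norm (exp (- (\<i> * s)) * u2) \<le> 3 * norm u2"
  unfolding norm_mult using norm_exp_strip[OF assms] by (intro mult_right_mono; simp)+

lemma invariance:
  assumes HS: "HS4 r c F" and R: "0 < R" "R \<le> r"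
    and eig: "\<And>u1 u2 e. 3 * norm u1 < R \<Longrightarrow> 3 * norm u2 < R \<Longrightarrow> norm e < R \<Longrightarrow>
        u1 * d_u1 F u1 u2 0 e - u2 * d_u2 F u1 u2 0 e = \<sigma> * F u1 u2 0 e"
    and z: "9 * norm z1 < R" "9 * norm z2 < R" "norm e < R" and t: "\<bar>Im t\<bar> < 1"
  shows "exp (- (\<i> * t * \<sigma>)) * F (exp (\<i> * t) * z1) (exp (- (\<i> * t)) * z2) 0 e = F z1 z2 0 e"
proof -
  define S where "S = {s::complex. \<bar>Im s\<bar> < 1}"
  define \<alpha> where "\<alpha> s = exp (- (\<i> * s * \<sigma>)) * F (exp (\<i> * s) * z1) (exp (- (\<i> * s)) * z2) 0 e" for s
  have D: "(\<alpha> has_field_derivative 0) (at s within S)" if "s \<in> S" for s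
  proof -
    have s: "\<bar>Im s\<bar> < 1" using that by (simp add: S_def)
    have u: "3 * norm z1 < r" "3 * norm z2 < r" "norm (0::complex) < r" "norm e < r" using z R by auto
    note fl = flow[OF HS u s]
    define P1 where "P1 = exp (\<i> * s) * z1"
    define P2 where "P2 = exp (- (\<i> * s)) * z2"
    have P: "3 * norm P1 < R" "3 * norm P2 < R"
      using flow_pt_bound(1)[OF s, of z1] flow_pt_bound(2)[OF s, of z2] z unfolding P1_def P2_def by linarith+
    have ev: "P1 * d_u1 F P1 P2 0 e - P2 * d_u2 F P1 P2 0 e = \<sigma> * F P1 P2 0 e"
      using eig[OF P z(3)] .
    have "(\<alpha> has_field_derivative
        (- (\<i> * \<sigma>) * exp (- (\<i> * s * \<sigma>)) * F P1 P2 0 e + exp (- (\<i> * s * \<sigma>)) * (\<i> * (P1 * d_u1 F P1 P2 0 e - P2 * d_u2 F P1 P2 0 e)))) (at s)"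
      unfolding \<alpha>_def P1_def P2_def
      by (rule derivative_eq_intros fl refl | simp)+
    then have "(\<alpha> has_field_derivative 0) (at s)" unfolding ev by (simp add: algebra_simps)
    then show ?thesis by (rule has_field_derivative_at_within)
  qed
  obtain k where k: "\<And>s. s \<in> S \<Longrightarrow> \<alpha> s = k"
    using has_field_derivative_zero_constant[OF strip_open_convex(2)[folded S_def] D] by blast
  have "\<alpha> t = \<alpha> 0" using k[of t] k[of 0] t by (simp add: S_def)
  then show ?thesis by (simp add: \<alpha>_def)
qed



lemma support:
  fixes \<sigma> :: int
  assumes HS: "HS4 r c F" and R: "0 < \<rho>" "\<rho> \<le> r"
    and inv: "\<And>z1 z2 z3 z4 \<theta>. norm z1 < \<rho> \<Longrightarrow> norm z2 < \<rho> \<Longrightarrow> norm z3 < \<rho> \<Longrightarrow> norm z4 < \<rho> \<Longrightarrow>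
        F z1 z2 z3 z4 = exp (- (\<i> * complex_of_real \<theta> * of_int \<sigma>)) *
           F (exp (\<i> * complex_of_real \<theta>) * z1) (exp (- (\<i> * complex_of_real \<theta>)) * z2) 0 z4"
    and nz: "c i j k l \<noteq> 0"
  shows "k = 0 \<and> int i - int j = \<sigma>"
proof -
  have zero: "c i j k l - c i j k l * (exp (\<i> * complex_of_real \<theta> * of_int (int i - int j - \<sigma>)) * (if k = 0 then 1 else 0)) = 0"
    for \<theta> :: real
  proof -
    define th where "th = complex_of_real \<theta>"
    define d where "d i j k l = c i j k l - c i j k l * (exp (\<i> * th * of_int (int i - int j - \<sigma>)) * (if k = 0 then 1 else 0))"
      for i j k l
    have "d i j k l = 0"
    proof (rule unique4[OF R(1)])
      fix z1 z2 z3 z4 :: complex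
      assume z: "norm z1 < \<rho>" "norm z2 < \<rho>" "norm z3 < \<rho>" "norm z4 < \<rho>"
      define P1 where "P1 = exp (\<i> * th) * z1"
      define P2 where "P2 = exp (- (\<i> * th)) * z2"
      have Pn: "norm P1 = norm z1" "norm P2 = norm z2" by (simp_all add: P1_def P2_def norm_mult th_def)
      have h1: "((\<lambda>(i,j,k,l). c i j k l * z1 ^ i * z2 ^ j * z3 ^ k * z4 ^ l) has_sum F z1 z2 z3 z4) UNIV"
        using HS z R by auto
      have h2: "((\<lambda>(i,j,k,l). c i j k l * P1 ^ i * P2 ^ j * 0 ^ k * z4 ^ l) has_sum F P1 P2 0 z4) UNIV"
        using HS z R Pn by auto
      have h3: "((\<lambda>n. exp (- (\<i> * th * of_int \<sigma>)) * (\<lambda>(i,j,k,l). c i j k l * P1 ^ i * P2 ^ j * 0 ^ k * z4 ^ l) n)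
          has_sum F z1 z2 z3 z4) UNIV"
        using has_sum_cmult_right[OF h2, of "exp (- (\<i> * th * of_int \<sigma>))"] inv[OF z, of \<theta>]
        by (simp add: P1_def P2_def th_def)
      have h4: "((\<lambda>n. (\<lambda>(i,j,k,l). c i j k l * z1 ^ i * z2 ^ j * z3 ^ k * z4 ^ l) n
          + - (exp (- (\<i> * th * of_int \<sigma>)) * (\<lambda>(i,j,k,l). c i j k l * P1 ^ i * P2 ^ j * 0 ^ k * z4 ^ l) n))
          has_sum (F z1 z2 z3 z4 + - F z1 z2 z3 z4)) UNIV"
        using h3 by (intro has_sum_add h1) (simp add: has_sum_uminus)
      have tw: "(\<lambda>(i,j,k,l). c i j k l * z1 ^ i * z2 ^ j * z3 ^ k * z4 ^ l) n
          + - (exp (- (\<i> * th * of_int \<sigma>)) * (\<lambda>(i,j,k,l). c i j k l * P1 ^ i * P2 ^ j * 0 ^ k * z4 ^ l) n)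
          = (\<lambda>(i,j,k,l). d i j k l * z1 ^ i * z2 ^ j * z3 ^ k * z4 ^ l) n" for n
      proof -
        obtain i j k l where n: "n = (i,j,k,l)" by (metis prod_cases4)
        have e: "P1 ^ i * P2 ^ j = z1 ^ i * z2 ^ j * exp (\<i> * th * of_int (int i - int j))"
          unfolding P1_def P2_def expid ..
        have e2: "exp (- (\<i> * th * of_int \<sigma>)) * exp (\<i> * th * of_int (int i - int j))
            = exp (\<i> * th * of_int (int i - int j - \<sigma>))"
          by (simp add: exp_add[symmetric] algebra_simps)
        have "exp (- (\<i> * th * of_int \<sigma>)) * (c i j k l * P1 ^ i * P2 ^ j * 0 ^ k * z4 ^ l)
            = c i j k l * (exp (- (\<i> * th * of_int \<sigma>)) * (P1 ^ i * P2 ^ j)) * 0 ^ k * z4 ^ l"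
          by (simp add: mult_ac)
        also have "\<dots> = c i j k l * (exp (\<i> * th * of_int (int i - int j - \<sigma>)) * (z1 ^ i * z2 ^ j)) * 0 ^ k * z4 ^ l"
          unfolding e e2[symmetric] by (simp add: mult_ac)
        finally have e3: "exp (- (\<i> * th * of_int \<sigma>)) * (c i j k l * P1 ^ i * P2 ^ j * 0 ^ k * z4 ^ l)
            = c i j k l * (exp (\<i> * th * of_int (int i - int j - \<sigma>)) * (z1 ^ i * z2 ^ j)) * 0 ^ k * z4 ^ l" .
        show ?thesis
          unfolding n prod.case e3 by (cases "k = 0") (simp_all add: d_def algebra_simps)
      qed
      show "((\<lambda>(i,j,k,l). d i j k l * z1 ^ i * z2 ^ j * z3 ^ k * z4 ^ l) has_sum 0) UNIV"
        using h4 tw by simp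
    qed
    then show ?thesis by (simp add: d_def th_def)
  qed
  have k0: "k = 0"
  proof (rule ccontr)
    assume "k \<noteq> 0"
    with zero[of 0] nz show False by simp
  qed
  moreover have "int i - int j = \<sigma>"
  proof (rule ccontr)
    assume m: "int i - int j \<noteq> \<sigma>"
    define m where "m = int i - int j - \<sigma>"
    have m0: "m \<noteq> 0" using m by (simp add: m_def)
    have "exp (\<i> * complex_of_real (pi / of_int m) * of_int m) = exp (\<i> * pi)"
      using m0 by (simp add: field_simps)
    also have "\<dots> = -1" by simp
    finally have "exp (\<i> * complex_of_real (pi / of_int m) * of_int m) = -1" .
    with zero[of "pi / of_int m"] k0 nz show False by (simp add: m_def)
  qed
  ultimately show ?thesis by blast
qed



lemma periodic_zero:
  assumes D: "\<And>s. \<bar>Im s\<bar> < 1 \<Longrightarrow> (\<alpha> has_field_derivative \<kappa>) (at s)"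
    and per: "\<alpha> (2 * complex_of_real pi) = \<alpha> 0"
  shows "\<kappa> = 0"
proof -
  define S where "S = {s::complex. \<bar>Im s\<bar> < 1}"
  have D': "((\<lambda>s. \<alpha> s - \<kappa> * s) has_field_derivative 0) (at s within S)" if "s \<in> S" for s
  proof -
    have a: "(\<alpha> has_field_derivative \<kappa>) (at s)" using that D by (simp add: S_def)
    have b: "((\<lambda>s. \<kappa> * s) has_field_derivative \<kappa> * 1) (at s)" by (intro derivative_eq_intros) auto
    have "((\<lambda>s. \<alpha> s - \<kappa> * s) has_field_derivative \<kappa> - \<kappa> * 1) (at s)"
      by (rule DERIV_diff[OF a b])
    then show ?thesis by (simp add: has_field_derivative_at_within)
  qed
  obtain k where k: "\<And>s. s \<in> S \<Longrightarrow> \<alpha> s - \<kappa> * s = k"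
    using has_field_derivative_zero_constant[OF strip_open_convex(2)[folded S_def] D'] by blast
  have "\<alpha> (2 * complex_of_real pi) - \<kappa> * (2 * complex_of_real pi) = \<alpha> 0 - \<kappa> * 0"
    using k[of "2 * complex_of_real pi"] k[of 0] by (simp add: S_def)
  then show ?thesis using per by simp
qed

lemma exp_2pi: "exp (\<i> * (2 * complex_of_real pi)) = 1" "exp (- (\<i> * (2 * complex_of_real pi))) = 1"
proof -
  show "exp (\<i> * (2 * complex_of_real pi)) = 1"
    by (metis exp_two_pi_i mult.commute mult.left_commute)
  then show "exp (- (\<i> * (2 * complex_of_real pi))) = 1" by (simp add: exp_minus)
qed

lemma eigen:
  fixes A B :: fn4 and chi chi' :: "complex \<Rightarrow> complex \<Rightarrow> complex"
  assumes HA: "HS4 r cA A" and HB: "HS4 r cB B" and R: "0 < R" "R \<le> r" "R \<le> 1"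
    and chiD: "\<And>h e. norm h < R \<Longrightarrow> norm e < R \<Longrightarrow> ((\<lambda>s. chi s e) has_field_derivative chi' h e) (at h)"
    and chinz: "\<And>h e. norm h < R \<Longrightarrow> norm e < R \<Longrightarrow> chi h e \<noteq> 0"
    and E1: "\<And>p1 p2 e. norm p1 < R \<Longrightarrow> norm p2 < R \<Longrightarrow> norm e < R \<Longrightarrow>
      A p1 p2 0 e * (chi (p1*p2) e + p1*p2*chi' (p1*p2) e) + B p1 p2 0 e * p1^2 * chi' (p1*p2) e
       - chi (p1*p2) e * (p1 * d_u1 A p1 p2 0 e - p2 * d_u2 A p1 p2 0 e) = 0"
    and E2: "\<And>p1 p2 e. norm p1 < R \<Longrightarrow> norm p2 < R \<Longrightarrow> norm e < R \<Longrightarrow>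
      - A p1 p2 0 e * p2^2 * chi' (p1*p2) e - B p1 p2 0 e * (chi (p1*p2) e + p1*p2*chi' (p1*p2) e)
       - chi (p1*p2) e * (p1 * d_u1 B p1 p2 0 e - p2 * d_u2 B p1 p2 0 e) = 0"
    and u: "3 * norm u1 < R" "3 * norm u2 < R" "norm e < R"
  shows "u1 * d_u1 A u1 u2 0 e - u2 * d_u2 A u1 u2 0 e = A u1 u2 0 e \<and>
         u1 * d_u1 B u1 u2 0 e - u2 * d_u2 B u1 u2 0 e = - B u1 u2 0 e"
proof -
  define P1 where "P1 s = exp (\<i> * s) * u1" for s
  define P2 where "P2 s = exp (- (\<i> * s)) * u2" for s
  define h where "h = u1 * u2"
  define f where "f = chi h e"
  define f' where "f' = chi' h e"
  have hP: "P1 s * P2 s = h" for s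
  proof -
    have "exp (\<i> * s) * exp (- (\<i> * s)) = 1" by (simp add: exp_minus)
    then show ?thesis unfolding P1_def P2_def h_def by (metis mult.assoc mult.commute mult.left_commute mult_1)
  qed
  have hR: "norm h < R"
  proof -
    have "norm h = norm u1 * norm u2" by (simp add: h_def norm_mult)
    also have "\<dots> \<le> norm u1 * 1" using u R by (intro mult_left_mono) auto
    finally show ?thesis using u norm_ge_zero[of u1] by linarith
  qed
  have fnz: "f \<noteq> 0" unfolding f_def using chinz[OF hR u(3)] .
  define a where "a s = A (P1 s) (P2 s) 0 e" for s
  define b where "b s = B (P1 s) (P2 s) 0 e" for s
  define DA where "DA s = P1 s * d_u1 A (P1 s) (P2 s) 0 e - P2 s * d_u2 A (P1 s) (P2 s) 0 e" for s
  define DB where "DB s = P1 s * d_u1 B (P1 s) (P2 s) 0 e - P2 s * d_u2 B (P1 s) (P2 s) 0 e" for s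
  define \<psi> where "\<psi> s = a s * P2 s + b s * P1 s" for s
  have ur: "3 * norm u1 < r" "3 * norm u2 < r" "norm (0::complex) < r" "norm e < r" using u R by auto
  have da: "(a has_field_derivative \<i> * DA s) (at s)" if "\<bar>Im s\<bar> < 1" for s
    using flow[OF HA ur that] unfolding a_def DA_def P1_def P2_def .
  have db: "(b has_field_derivative \<i> * DB s) (at s)" if "\<bar>Im s\<bar> < 1" for s
    using flow[OF HB ur that] unfolding b_def DB_def P1_def P2_def .
  have PR: "norm (P1 s) < R" "norm (P2 s) < R" if "\<bar>Im s\<bar> < 1" for s
    using flow_pt_bound(1)[OF that, of u1] flow_pt_bound(2)[OF that, of u2] u
    unfolding P1_def P2_def by linarith+
  have rel1: "f * (DA s - a s) = f' * P1 s * \<psi> s" if "\<bar>Im s\<bar> < 1" for s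
  proof -
    have "A (P1 s) (P2 s) 0 e * (chi (P1 s * P2 s) e + P1 s * P2 s * chi' (P1 s * P2 s) e) + B (P1 s) (P2 s) 0 e * (P1 s)^2 * chi' (P1 s * P2 s) e
       - chi (P1 s * P2 s) e * (P1 s * d_u1 A (P1 s) (P2 s) 0 e - P2 s * d_u2 A (P1 s) (P2 s) 0 e) = 0"
      by (rule E1[OF PR[OF that] u(3)])
    then have "a s * (f + h * f') + b s * (P1 s)^2 * f' - f * DA s = 0"
      unfolding hP a_def b_def DA_def f_def f'_def by simp
    then show ?thesis unfolding \<psi>_def using hP[of s, symmetric] by (simp add: algebra_simps power2_eq_square)
  qed
  have rel2: "f * (DB s + b s) = - (f' * P2 s * \<psi> s)" if "\<bar>Im s\<bar> < 1" for s
  proof -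
    have "- A (P1 s) (P2 s) 0 e * (P2 s)^2 * chi' (P1 s * P2 s) e - B (P1 s) (P2 s) 0 e * (chi (P1 s * P2 s) e + P1 s * P2 s * chi' (P1 s * P2 s) e)
       - chi (P1 s * P2 s) e * (P1 s * d_u1 B (P1 s) (P2 s) 0 e - P2 s * d_u2 B (P1 s) (P2 s) 0 e) = 0"
      by (rule E2[OF PR[OF that] u(3)])
    then have "- a s * (P2 s)^2 * f' - b s * (f + h * f') - f * DB s = 0"
      unfolding hP a_def b_def DB_def f_def f'_def by simp
    then show ?thesis unfolding \<psi>_def using hP[of s, symmetric] by (simp add: algebra_simps power2_eq_square)
  qed
  have dP1: "(P1 has_field_derivative \<i> * P1 s) (at s)" for s
    unfolding P1_def by (auto intro!: derivative_eq_intros)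
  have dP2: "(P2 has_field_derivative - \<i> * P2 s) (at s)" for s
    unfolding P2_def by (auto intro!: derivative_eq_intros)
  have dpsi: "(\<psi> has_field_derivative 0) (at s within {s. \<bar>Im s\<bar> < 1})" if "s \<in> {s. \<bar>Im s\<bar> < 1}" for s
  proof -
    have s: "\<bar>Im s\<bar> < 1" using that by simp
    have "(\<psi> has_field_derivative (\<i> * DA s * P2 s + a s * (- \<i> * P2 s) + (\<i> * DB s * P1 s + b s * (\<i> * P1 s)))) (at s)"
      unfolding \<psi>_def[abs_def] by (rule DERIV_cong[OF DERIV_add[OF DERIV_mult'[OF da[OF s] dP2] DERIV_mult'[OF db[OF s] dP1]]]) (simp add: algebra_simps)
    moreover have "\<i> * DA s * P2 s + a s * (- \<i> * P2 s) + (\<i> * DB s * P1 s + b s * (\<i> * P1 s)) = 0"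
    proof -
      have "f * (\<i> * DA s * P2 s + a s * (- \<i> * P2 s) + (\<i> * DB s * P1 s + b s * (\<i> * P1 s)))
          = \<i> * (P2 s * (f * (DA s - a s)) + P1 s * (f * (DB s + b s)))" by (simp add: algebra_simps)
      also have "\<dots> = 0" unfolding rel1[OF s] rel2[OF s] by (simp add: algebra_simps)
      finally show ?thesis using fnz by simp
    qed
    ultimately show ?thesis by (simp add: has_field_derivative_at_within)
  qed
  obtain \<Psi> where \<Psi>: "\<And>s. s \<in> {s. \<bar>Im s\<bar> < 1} \<Longrightarrow> \<psi> s = \<Psi>"
    using has_field_derivative_zero_constant[OF strip_open_convex(2) dpsi] by blast
  have P0: "P1 0 = u1" "P2 0 = u2" by (simp_all add: P1_def P2_def)
  have P2pi: "P1 (2 * complex_of_real pi) = u1" "P2 (2 * complex_of_real pi) = u2"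
    by (simp_all add: P1_def P2_def exp_2pi)
  define \<kappa> where "\<kappa> = \<i> * f' * u1 * \<Psi> / f"
  have dal: "((\<lambda>s. exp (- (\<i> * s)) * a s) has_field_derivative \<kappa>) (at s)" if s: "\<bar>Im s\<bar> < 1" for s
  proof -
    have "((\<lambda>s. exp (- (\<i> * s)) * a s) has_field_derivative
        (- \<i> * exp (- (\<i> * s)) * a s + exp (- (\<i> * s)) * (\<i> * DA s))) (at s)"
      by (rule DERIV_cong[OF DERIV_mult'[OF _ da[OF s]]]) (auto intro!: derivative_eq_intros simp: algebra_simps)
    moreover have "- \<i> * exp (- (\<i> * s)) * a s + exp (- (\<i> * s)) * (\<i> * DA s) = \<kappa>"
    proof -
      have "f * (- \<i> * exp (- (\<i> * s)) * a s + exp (- (\<i> * s)) * (\<i> * DA s))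
          = \<i> * exp (- (\<i> * s)) * (f * (DA s - a s))" by (simp add: algebra_simps)
      also have "\<dots> = \<i> * f' * (exp (- (\<i> * s)) * P1 s) * \<psi> s" unfolding rel1[OF s] by (simp add: algebra_simps)
      also have "exp (- (\<i> * s)) * P1 s = u1" by (simp add: P1_def exp_minus field_simps)
      also have "\<psi> s = \<Psi>" using \<Psi> s by simp
      finally show ?thesis using fnz unfolding \<kappa>_def by (simp add: field_simps)
    qed
    ultimately show ?thesis by simp
  qed
  have "\<kappa> = 0"
    by (rule periodic_zero[OF dal]) (simp_all add: a_def P0 P2pi exp_2pi)
  then have k1: "f' * u1 * \<Psi> = 0" using fnz by (simp add: \<kappa>_def)
  have "f * (DA 0 - a 0) = 0" using rel1[of 0] \<Psi>[of 0] k1 P0 by (simp add: mult_ac)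
  then have resA: "DA 0 = a 0" using fnz by simp
  define \<mu> where "\<mu> = - (\<i> * f' * u2 * \<Psi> / f)"
  have dbe: "((\<lambda>s. exp (\<i> * s) * b s) has_field_derivative \<mu>) (at s)" if s: "\<bar>Im s\<bar> < 1" for s
  proof -
    have "((\<lambda>s. exp (\<i> * s) * b s) has_field_derivative
        (\<i> * exp (\<i> * s) * b s + exp (\<i> * s) * (\<i> * DB s))) (at s)"
      by (rule DERIV_cong[OF DERIV_mult'[OF _ db[OF s]]]) (auto intro!: derivative_eq_intros simp: algebra_simps)
    moreover have "\<i> * exp (\<i> * s) * b s + exp (\<i> * s) * (\<i> * DB s) = \<mu>"
    proof -
      have "f * (\<i> * exp (\<i> * s) * b s + exp (\<i> * s) * (\<i> * DB s))
          = \<i> * exp (\<i> * s) * (f * (DB s + b s))" by (simp add: algebra_simps)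
      also have "\<dots> = - (\<i> * f' * (exp (\<i> * s) * P2 s) * \<psi> s)" unfolding rel2[OF s] by (simp add: algebra_simps)
      also have "exp (\<i> * s) * P2 s = u2" by (simp add: P2_def exp_minus field_simps)
      also have "\<psi> s = \<Psi>" using \<Psi> s by simp
      finally show ?thesis using fnz unfolding \<mu>_def by (simp add: field_simps)
    qed
    ultimately show ?thesis by simp
  qed
  have "\<mu> = 0"
    by (rule periodic_zero[OF dbe]) (simp_all add: b_def P0 P2pi exp_2pi)
  then have k2: "f' * u2 * \<Psi> = 0" using fnz by (simp add: \<mu>_def)
  have "f * (DB 0 + b 0) = 0" using rel2[of 0] \<Psi>[of 0] k2 P0 by (simp add: mult_ac)
  then have resB: "DB 0 = - b 0" using fnz by (simp add: add_eq_0_iff)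
  show ?thesis using resA resB by (simp add: DA_def DB_def a_def b_def P0)
qed



lemma Dp1:
  assumes "(g has_field_derivative g') (at (p1 * p2))"
  shows "deriv (\<lambda>t. g (t * p2) * t) p1 = g' * p2 * p1 + g (p1 * p2)"
proof -
  have c: "((\<lambda>t. g (t * p2)) has_field_derivative g' * p2) (at p1)"
    proof -
    have i: "((\<lambda>t. t * p2) has_field_derivative p2) (at p1)" by (auto intro!: derivative_eq_intros)
    show ?thesis using DERIV_chain2[where f=g and g="\<lambda>t. t * p2" and x=p1 and Da=g' and Db=p2 and s=UNIV] assms i by simp
  qed
  show ?thesis
    by (rule DERIV_imp_deriv, rule DERIV_cong[OF DERIV_mult'[OF c DERIV_ident]]) (simp add: algebra_simps)
qed

lemma Dp2:
  assumes "(g has_field_derivative g') (at (p1 * p2))"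
  shows "deriv (\<lambda>t. g (p1 * t) * p1) p2 = g' * p1 * p1"
proof -
  have c: "((\<lambda>t. g (p1 * t)) has_field_derivative g' * p1) (at p2)"
    proof -
    have i: "((\<lambda>t. p1 * t) has_field_derivative p1) (at p2)" by (auto intro!: derivative_eq_intros)
    show ?thesis using DERIV_chain2[where f=g and g="\<lambda>t. p1 * t" and x=p2 and Da=g' and Db=p1 and s=UNIV] assms i by simp
  qed
  show ?thesis
    by (rule DERIV_imp_deriv, rule DERIV_cong[OF DERIV_mult'[OF c DERIV_const]]) (simp add: algebra_simps)
qed

lemma Dp3:
  assumes "(g has_field_derivative g') (at (p1 * p2))"
  shows "deriv (\<lambda>t. - g (t * p2) * p2) p1 = - (g' * p2 * p2)"
proof -
  have c: "((\<lambda>t. g (t * p2)) has_field_derivative g' * p2) (at p1)"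
    proof -
    have i: "((\<lambda>t. t * p2) has_field_derivative p2) (at p1)" by (auto intro!: derivative_eq_intros)
    show ?thesis using DERIV_chain2[where f=g and g="\<lambda>t. t * p2" and x=p1 and Da=g' and Db=p2 and s=UNIV] assms i by simp
  qed
  show ?thesis
    by (rule DERIV_imp_deriv, rule DERIV_cong[OF DERIV_mult'[OF DERIV_minus[OF c] DERIV_const]]) (simp add: algebra_simps)
qed

lemma Dp4:
  assumes "(g has_field_derivative g') (at (p1 * p2))"
  shows "deriv (\<lambda>t. - g (p1 * t) * t) p2 = - (g' * p1 * p2 + g (p1 * p2))"
proof -
  have c: "((\<lambda>t. g (p1 * t)) has_field_derivative g' * p1) (at p2)"
    proof -
    have i: "((\<lambda>t. p1 * t) has_field_derivative p1) (at p2)" by (auto intro!: derivative_eq_intros)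
    show ?thesis using DERIV_chain2[where f=g and g="\<lambda>t. p1 * t" and x=p2 and Da=g' and Db=p1 and s=UNIV] assms i by simp
  qed
  show ?thesis
    by (rule DERIV_imp_deriv, rule DERIV_cong[OF DERIV_mult'[OF DERIV_minus[OF c] DERIV_ident]]) (simp add: algebra_simps)
qed

lemma deriv_const_fun: "deriv (\<lambda>t. c) x = 0"
  by (rule DERIV_imp_deriv) (rule DERIV_const)

abbreviation eqon :: "real \<Rightarrow> fn4 \<Rightarrow> fn4 \<Rightarrow> bool" where
  "eqon \<rho> F G \<equiv> (\<forall>u1 u2 x e. norm u1 < \<rho> \<and> norm u2 < \<rho> \<and> norm x < \<rho> \<and> norm e < \<rho> \<longrightarrow> F u1 u2 x e = G u1 u2 x e)"

lemma loc:
  assumes eq: "eqon \<rho> F G" and p: "norm p1 < \<rho>" "norm p2 < \<rho>" "norm p3 < \<rho>" "norm p4 < \<rho>"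
  shows "d_u1 F p1 p2 p3 p4 = d_u1 G p1 p2 p3 p4" "d_u2 F p1 p2 p3 p4 = d_u2 G p1 p2 p3 p4"
    "d_x F p1 p2 p3 p4 = d_x G p1 p2 p3 p4"
proof -
  have ev: "eventually (\<lambda>t. t \<in> ball 0 \<rho>) (nhds q)" if "norm q < \<rho>" for q :: complex
    using that by (intro eventually_nhds_in_open) auto
  show "d_u1 F p1 p2 p3 p4 = d_u1 G p1 p2 p3 p4" unfolding d_u1_def
    by (rule deriv_cong_ev[OF eventually_mono[OF ev[OF p(1)]] refl]) (use eq p in auto)
  show "d_u2 F p1 p2 p3 p4 = d_u2 G p1 p2 p3 p4" unfolding d_u2_def
    by (rule deriv_cong_ev[OF eventually_mono[OF ev[OF p(2)]] refl]) (use eq p in auto)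
  show "d_x F p1 p2 p3 p4 = d_x G p1 p2 p3 p4" unfolding d_x_def
    by (rule deriv_cong_ev[OF eventually_mono[OF ev[OF p(3)]] refl]) (use eq p in auto)
qed



lemma Dp5:
  assumes "(g has_field_derivative g') (at (p1 * p2))"
  shows "deriv (\<lambda>t. g (p1 * t) * t) p2 = g' * p1 * p2 + g (p1 * p2)"
proof -
  have c: "((\<lambda>t. g (p1 * t)) has_field_derivative g' * p1) (at p2)"
  proof -
    have i: "((\<lambda>t. p1 * t) has_field_derivative p1) (at p2)" by (auto intro!: derivative_eq_intros)
    show ?thesis using DERIV_chain2[where f=g and g="\<lambda>t. p1 * t" and x=p2 and Da=g' and Db=p1 and s=UNIV] assms i by simp
  qed
  show ?thesis
    by (rule DERIV_imp_deriv, rule DERIV_cong[OF DERIV_mult'[OF c DERIV_ident]]) (simp add: algebra_simps)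
qed

lemma HS4_mono: "HS4 r c F \<Longrightarrow> r' \<le> r \<Longrightarrow> HS4 r' c F"
  by auto

lemma HS4_swap:
  assumes "HS4 r c F"
  shows "HS4 r (\<lambda>i j k l. c j i k l) (\<lambda>u1 u2 x e. F u2 u1 x e)"
proof (intro allI impI)
  fix z1 z2 z3 z4 :: complex
  assume z: "norm z1 < r \<and> norm z2 < r \<and> norm z3 < r \<and> norm z4 < r"
  define sw where "sw = (\<lambda>(i::nat,j::nat,k::nat,l::nat). (j,i,k,l))"
  have bij: "bij_betw sw UNIV UNIV"
    by (rule bij_betwI[where g=sw]) (auto simp: sw_def split: prod.splits)
  have h: "((\<lambda>(i,j,k,l). c i j k l * z2 ^ i * z1 ^ j * z3 ^ k * z4 ^ l) has_sum F z2 z1 z3 z4) UNIV"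
    using assms z by auto
  have "((\<lambda>n. (\<lambda>(i,j,k,l). c i j k l * z2 ^ i * z1 ^ j * z3 ^ k * z4 ^ l) (sw n)) has_sum F z2 z1 z3 z4) UNIV"
    using h has_sum_reindex_bij_betw[OF bij] by blast
  moreover have "(\<lambda>n. (\<lambda>(i,j,k,l). c i j k l * z2 ^ i * z1 ^ j * z3 ^ k * z4 ^ l) (sw n))
      = (\<lambda>(i,j,k,l). c j i k l * z1 ^ i * z2 ^ j * z3 ^ k * z4 ^ l)"
    by (intro ext) (auto simp: sw_def mult_ac split: prod.splits)
  ultimately show "((\<lambda>(i,j,k,l). (\<lambda>i j k l. c j i k l) i j k l * z1 ^ i * z2 ^ j * z3 ^ k * z4 ^ l)
        has_sum (\<lambda>u1 u2 x e. F u2 u1 x e) z1 z2 z3 z4) UNIV" by simp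
qed

lemma sparse_coeff:
  assumes HS: "HS4 r c F" and r: "0 < r"
    and sup: "\<And>i j k l. c i j k l \<noteq> 0 \<Longrightarrow> k = 0 \<and> i = Suc j"
  defines "ra \<equiv> min ((r/2) * (r/2)) (r/2)"
  defines "a \<equiv> (\<lambda>h e. \<Sum>\<^sub>\<infinity>(j,l). c (Suc j) j 0 l * h ^ j * e ^ l)"
  shows "0 < ra" "HS2 ra (\<lambda>j l. c (Suc j) j 0 l) a"
    and "\<And>z1 z2 z3 z4. norm z1 < r \<Longrightarrow> norm z2 < r \<Longrightarrow> norm z3 < r \<Longrightarrow> norm z4 < r \<Longrightarrow>
          norm (z1 * z2) < ra \<Longrightarrow> norm z4 < ra \<Longrightarrow> F z1 z2 z3 z4 = a (z1 * z2) z4 * z1"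
proof -
  define \<rho> where "\<rho> = r / 2"
  have rho: "0 < \<rho>" "\<rho> < r" using r by (auto simp: \<rho>_def)
  show ra0: "0 < ra" using rho by (simp add: ra_def \<rho>_def)
  define g where "g = (\<lambda>(j::nat,l::nat). (Suc j, j, 0::nat, l))"
  have injg: "inj g" by (auto simp: g_def inj_def)
  note sN = HS4_abs[OF HS less_imp_le[OF rho(1)] rho(2)]
  have sub: "(\<lambda>(j,l). norm (c (Suc j) j 0 l) * \<rho> ^ (Suc j + j + 0 + l)) summable_on UNIV"
  proof -
    have "(\<lambda>(i,j,k,l). norm (c i j k l) * \<rho> ^ (i+j+k+l)) summable_on range g"
      by (rule summable_on_subset_banach[OF sN]) auto
    then have "((\<lambda>(i,j,k,l). norm (c i j k l) * \<rho> ^ (i+j+k+l)) \<circ> g) summable_on UNIV"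
      using summable_on_reindex[OF injg] by blast
    moreover have "((\<lambda>(i,j,k,l). norm (c i j k l) * \<rho> ^ (i+j+k+l)) \<circ> g) = (\<lambda>(j,l). norm (c (Suc j) j 0 l) * \<rho> ^ (Suc j + j + 0 + l))"
      by (auto simp: g_def fun_eq_iff)
    ultimately show ?thesis by simp
  qed
  show HS2: "HS2 ra (\<lambda>j l. c (Suc j) j 0 l) a"
  proof (intro allI impI)
    fix h e :: complex assume he: "norm h < ra \<and> norm e < ra"
    have "(\<lambda>n. norm ((\<lambda>(j,l). c (Suc j) j 0 l * h ^ j * e ^ l) n)) summable_on UNIV"
    proof (rule summable_on_comparison_test[OF summable_on_cmult_right[OF sub, of "1/\<rho>"]])
      fix n :: "nat \<times> nat"
      obtain j l where n: "n = (j,l)" by (metis prod.exhaust)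
      have hb: "norm h \<le> \<rho> * \<rho>" "norm e \<le> \<rho>" using he by (auto simp: ra_def \<rho>_def)
      have "norm h ^ j * norm e ^ l \<le> (\<rho> * \<rho>) ^ j * \<rho> ^ l"
        using hb rho by (intro mult_mono power_mono) auto
      also have "\<dots> = 1 / \<rho> * \<rho> ^ (Suc j + j + 0 + l)" using rho
        by (simp add: power_add power_mult_distrib field_simps)
      finally have "norm (c (Suc j) j 0 l) * (norm h ^ j * norm e ^ l) \<le> norm (c (Suc j) j 0 l) * (1 / \<rho> * \<rho> ^ (Suc j + j + 0 + l))"
        by (rule mult_left_mono) auto
      then show "norm ((\<lambda>(j,l). c (Suc j) j 0 l * h ^ j * e ^ l) n) \<le> 1 / \<rho> * (\<lambda>(j,l). norm (c (Suc j) j 0 l) * \<rho> ^ (Suc j + j + 0 + l)) n"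
        using rho by (simp add: n norm_mult norm_power mult_ac)
    qed auto
    then have "(\<lambda>(j,l). c (Suc j) j 0 l * h ^ j * e ^ l) summable_on UNIV" by (rule abs_summable_summable)
    then show "((\<lambda>(j,l). c (Suc j) j 0 l * h ^ j * e ^ l) has_sum a h e) UNIV"
      by (simp add: a_def)
  qed
  fix z1 z2 z3 z4 :: complex
  assume z: "norm z1 < r" "norm z2 < r" "norm z3 < r" "norm z4 < r" and hz: "norm (z1 * z2) < ra" "norm z4 < ra"
  have full: "((\<lambda>(i,j,k,l). c i j k l * z1 ^ i * z2 ^ j * z3 ^ k * z4 ^ l) has_sum F z1 z2 z3 z4) UNIV"
    using HS z by auto
  have "((\<lambda>(i,j,k,l). c i j k l * z1 ^ i * z2 ^ j * z3 ^ k * z4 ^ l) has_sum F z1 z2 z3 z4) (range g)"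
    by (rule has_sum_cong_neutral[THEN iffD1, OF _ _ _ full])
       (auto simp: g_def image_iff dest!: sup split: prod.splits)
  then have "(((\<lambda>(i,j,k,l). c i j k l * z1 ^ i * z2 ^ j * z3 ^ k * z4 ^ l) \<circ> g) has_sum F z1 z2 z3 z4) UNIV"
    using has_sum_reindex[OF injg] by blast
  moreover have "((\<lambda>(i,j,k,l). c i j k l * z1 ^ i * z2 ^ j * z3 ^ k * z4 ^ l) \<circ> g)
       = (\<lambda>n. (\<lambda>(j,l). c (Suc j) j 0 l * (z1 * z2) ^ j * z4 ^ l) n * z1)"
    by (auto simp: g_def fun_eq_iff power_mult_distrib mult_ac)
  ultimately have h1: "((\<lambda>n. (\<lambda>(j,l). c (Suc j) j 0 l * (z1 * z2) ^ j * z4 ^ l) n * z1) has_sum F z1 z2 z3 z4) UNIV"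
    by simp
  have h2: "((\<lambda>n. (\<lambda>(j,l). c (Suc j) j 0 l * (z1 * z2) ^ j * z4 ^ l) n * z1) has_sum a (z1 * z2) z4 * z1) UNIV"
    using HS2 hz by (intro has_sum_cmult_left) auto
  show "F z1 z2 z3 z4 = a (z1 * z2) z4 * z1" using has_sum_unique[OF h1 h2] .
qed



lemma zero_const_ball:
  assumes "\<And>t. norm t < R \<Longrightarrow> (g has_field_derivative 0) (at t)" "norm t1 < R" "norm t2 < R"
  shows "g t1 = g (t2::complex)"
proof -
  have "\<And>t. t \<in> ball 0 R \<Longrightarrow> (g has_field_derivative 0) (at t within ball 0 R)"
    using assms(1) by (auto intro: has_field_derivative_at_within)
  from has_field_derivative_zero_constant[OF convex_ball this] obtain k where "\<And>t. t \<in> ball 0 R \<Longrightarrow> g t = k" by blast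
  then show ?thesis using assms(2,3) by auto
qed

lemma xindep:
  assumes HS: "HS4 r c F" and R: "R \<le> r"
    and dx: "\<And>t. norm t < R \<Longrightarrow> d_x F z1 z2 t z4 = 0"
    and z: "norm z1 < R" "norm z2 < R" "norm z3 < R" "norm z4 < R"
  shows "F z1 z2 z3 z4 = F z1 z2 0 z4"
proof (rule zero_const_ball[where g="\<lambda>t. F z1 z2 t z4" and R=R])
  fix t :: complex assume t: "norm t < R"
  have zr: "norm z1 < r" "norm z2 < r" "norm t < r" "norm z4 < r" using z t R by auto
  note D = D3(1)[OF HS zr]
  have "d_x F z1 z2 t z4 = (\<Sum>\<^sub>\<infinity>(i, j, k, l). c i j k l * (of_nat k * t ^ (k - 1)) * (z1 ^ i * z2 ^ j * z4 ^ l))"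
    unfolding d_x_def by (rule DERIV_imp_deriv[OF D])
  then have "((\<lambda>t. F z1 z2 t z4) has_field_derivative d_x F z1 z2 t z4) (at t)"
    using D by simp
  then show "((\<lambda>t. F z1 z2 t z4) has_field_derivative 0) (at t)" using dx[OF t] by simp
next
  show "norm z3 < R" by (rule z(3))
  show "norm (0::complex) < R" using z(1) norm_ge_zero[of z1] by (simp del: norm_ge_zero)
qed



lemma chi_deriv:
  assumes HS: "HS2 r c f" and h: "norm h < r" and e: "norm e < r"
  shows "((\<lambda>s. f s e) has_field_derivative deriv (\<lambda>s. f s e) h) (at h)"
proof -
  note D = D2v[OF HS h e]
  have "deriv (\<lambda>s. f s e) h = (\<Sum>\<^sub>\<infinity>(i,j). c i j * (of_nat i * h ^ (i - 1)) * e ^ j)"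
    by (rule DERIV_imp_deriv[OF D])
  then show ?thesis using D by simp
qed

lemma bracket_eqs:
  fixes A B C :: fn4
  assumes br1: "fst (lie_bracket (A, B, C) (Z_G chi0 chi1)) p1 p2 0 e = 0"
    and br2: "fst (snd (lie_bracket (A, B, C) (Z_G chi0 chi1))) p1 p2 0 e = 0"
    and C0: "C p1 p2 0 e = 0"
    and gD: "((\<lambda>s. chi0 s e) has_field_derivative g') (at (p1 * p2))"
  shows "A p1 p2 0 e * (chi0 (p1*p2) e + p1*p2*g') + B p1 p2 0 e * p1^2 * g'
       - chi0 (p1*p2) e * (p1 * d_u1 A p1 p2 0 e - p2 * d_u2 A p1 p2 0 e) = 0"
    and "- A p1 p2 0 e * p2^2 * g' - B p1 p2 0 e * (chi0 (p1*p2) e + p1*p2*g')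
       - chi0 (p1*p2) e * (p1 * d_u1 B p1 p2 0 e - p2 * d_u2 B p1 p2 0 e) = 0"
proof -
  define zf1 where "zf1 = (\<lambda>u1 u2 x e. chi_fun chi0 chi1 (u1 * u2) x e * u1)"
  define zf2 where "zf2 = (\<lambda>u1 u2 x e. - chi_fun chi0 chi1 (u1 * u2) x e * u2)"
  define zf3 :: fn4 where "zf3 = (\<lambda>u1 u2 x e. x * (x - e))"
  have Z: "Z_G chi0 chi1 = (zf1, zf2, zf3)" by (simp add: Z_G_def zf1_def zf2_def zf3_def)
  have g: "((\<lambda>s. chi_fun chi0 chi1 s 0 e) has_field_derivative g') (at (p1 * p2))"
    using gD by (simp add: chi_fun_def)
  have z11: "d_u1 zf1 p1 p2 0 e = g' * p2 * p1 + chi0 (p1 * p2) e"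
    unfolding d_u1_def zf1_def using Dp1[OF g] by (simp add: chi_fun_def)
  have z12: "d_u2 zf1 p1 p2 0 e = g' * p1 * p1"
    unfolding d_u2_def zf1_def using Dp2[OF g] by (simp add: chi_fun_def)
  have z21: "d_u1 zf2 p1 p2 0 e = - (g' * p2 * p2)"
    unfolding d_u1_def zf2_def using Dp3[OF g] by (simp add: chi_fun_def)
  have z22: "d_u2 zf2 p1 p2 0 e = - (g' * p1 * p2 + chi0 (p1 * p2) e)"
    unfolding d_u2_def zf2_def using Dp4[OF g] by (simp add: chi_fun_def)
  have v1: "zf1 p1 p2 0 e = chi0 (p1*p2) e * p1" "zf2 p1 p2 0 e = - chi0 (p1*p2) e * p2" "zf3 p1 p2 0 e = 0"
    by (simp_all add: zf1_def zf2_def zf3_def chi_fun_def)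
  from br1 have "A p1 p2 0 e * d_u1 zf1 p1 p2 0 e + B p1 p2 0 e * d_u2 zf1 p1 p2 0 e + C p1 p2 0 e * d_x zf1 p1 p2 0 e
      - (zf1 p1 p2 0 e * d_u1 A p1 p2 0 e + zf2 p1 p2 0 e * d_u2 A p1 p2 0 e + zf3 p1 p2 0 e * d_x A p1 p2 0 e) = 0"
    unfolding Z lie_bracket_def vf_apply_def by simp
  then show "A p1 p2 0 e * (chi0 (p1*p2) e + p1*p2*g') + B p1 p2 0 e * p1^2 * g'
       - chi0 (p1*p2) e * (p1 * d_u1 A p1 p2 0 e - p2 * d_u2 A p1 p2 0 e) = 0"
    unfolding z11 z12 v1 C0 by (simp add: algebra_simps power2_eq_square)
  from br2 have "A p1 p2 0 e * d_u1 zf2 p1 p2 0 e + B p1 p2 0 e * d_u2 zf2 p1 p2 0 e + C p1 p2 0 e * d_x zf2 p1 p2 0 e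
      - (zf1 p1 p2 0 e * d_u1 B p1 p2 0 e + zf2 p1 p2 0 e * d_u2 B p1 p2 0 e + zf3 p1 p2 0 e * d_x B p1 p2 0 e) = 0"
    unfolding Z lie_bracket_def vf_apply_def by simp
  then show "- A p1 p2 0 e * p2^2 * g' - B p1 p2 0 e * (chi0 (p1*p2) e + p1*p2*g')
       - chi0 (p1*p2) e * (p1 * d_u1 B p1 p2 0 e - p2 * d_u2 B p1 p2 0 e) = 0"
    unfolding z21 z22 v1 C0 by (simp add: algebra_simps power2_eq_square)
qed



lemma near0I:
  assumes "0 < r" "\<And>u1 u2 x e. norm u1 < r \<Longrightarrow> norm u2 < r \<Longrightarrow> norm x < r \<Longrightarrow> norm e < r \<Longrightarrow> P u1 u2 x e"
  shows "near0 P"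
  unfolding near0_def
  by (rule exI[of _ r], intro conjI assms(1) allI impI, rule assms(2)) auto

lemma forward:
  assumes chi0: "analytic0_2 chi0" and nz: "chi0 0 0 \<noteq> 0" and X: "vert_sympl_sym chi0 chi1 X"
  shows "\<exists>a. analytic0_2 a \<and> germ_eq X (ham_vf a)"
proof -
  obtain A B C where Xd: "X = (A, B, C)" by (metis prod.exhaust)
  from X obtain rA cA where rA: "0 < rA" "HS4 rA cA A"
    unfolding vert_sympl_sym_def analytic0_4_def Xd by auto
  from X obtain rB cB where rB: "0 < rB" "HS4 rB cB B"
    unfolding vert_sympl_sym_def analytic0_4_def Xd by auto
  from X obtain r1 where r1: "0 < r1" "\<And>u1 u2 x e. norm u1 < r1 \<Longrightarrow> norm u2 < r1 \<Longrightarrow> norm x < r1 \<Longrightarrow> norm e < r1 \<Longrightarrow> C u1 u2 x e = 0"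
    unfolding vert_sympl_sym_def near0_def Xd by auto
  from X obtain r2 where r2: "0 < r2" "\<And>u1 u2 x e. norm u1 < r2 \<Longrightarrow> norm u2 < r2 \<Longrightarrow> norm x < r2 \<Longrightarrow> norm e < r2 \<Longrightarrow>
      d_u1 A u1 u2 x e + d_u2 B u1 u2 x e = 0 \<and> - d_x B u1 u2 x e = 0 \<and> d_x A u1 u2 x e = 0"
    unfolding vert_sympl_sym_def lie_area_vanishes_def near0_def Xd by auto
  from X obtain r3 where r3: "0 < r3" "\<And>u1 u2 x e. norm u1 < r3 \<Longrightarrow> norm u2 < r3 \<Longrightarrow> norm x < r3 \<Longrightarrow> norm e < r3 \<Longrightarrow>
      fst (lie_bracket (A,B,C) (Z_G chi0 chi1)) u1 u2 x e = 0 \<and> fst (snd (lie_bracket (A,B,C) (Z_G chi0 chi1))) u1 u2 x e = 0"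
    unfolding vert_sympl_sym_def germ_eq_def near0_def zero_vf_def Xd by auto
  from chi0 obtain rc cc where rc: "0 < rc" "HS2 rc cc chi0" unfolding analytic0_2_def by auto
  from HS2_nonzero[OF rc(2) rc(1) nz] obtain \<delta> where \<delta>: "0 < \<delta>"
      "\<And>h e. norm h < \<delta> \<Longrightarrow> norm e < \<delta> \<Longrightarrow> chi0 h e \<noteq> 0" by blast
  define R0 where "R0 = min rA rB"
  define R where "R = min R0 (min (min r1 r2) (min r3 (min rc (min \<delta> 1))))"
  have R0: "0 < R0" using rA rB by (simp add: R0_def)
  have Rp: "0 < R" unfolding R_def using R0 r1(1) r2(1) r3(1) rc(1) \<delta>(1) by simp
  have R: "0 < R" "R \<le> R0" "R \<le> r1" "R \<le> r2" "R \<le> r3" "R \<le> rc" "R \<le> \<delta>" "R \<le> 1"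
    using Rp unfolding R_def by (simp_all add: min_le_iff_disj)
  have HA: "HS4 R0 cA A" using rA by (auto simp: R0_def)
  have HB: "HS4 R0 cB B" using rB by (auto simp: R0_def)
  define chi' where "chi' h e = deriv (\<lambda>s. chi0 s e) h" for h e
  have chiD: "((\<lambda>s. chi0 s e) has_field_derivative chi' h e) (at h)" if "norm h < R" "norm e < R" for h e
    unfolding chi'_def by (rule chi_deriv[OF rc(2)]) (use that R in auto)
  have chinz: "chi0 h e \<noteq> 0" if "norm h < R" "norm e < R" for h e
    using \<delta>(2) that R by auto
  have hR: "norm (p1 * p2) < R" if "norm p1 < R" "norm p2 < R" for p1 p2 :: complex
  proof -
    have "norm (p1 * p2) \<le> norm p1 * 1" unfolding norm_mult using that R by (intro mult_left_mono) auto
    then show ?thesis using that by simp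
  qed
  have E: "A p1 p2 0 e * (chi0 (p1*p2) e + p1*p2*chi' (p1*p2) e) + B p1 p2 0 e * p1^2 * chi' (p1*p2) e
       - chi0 (p1*p2) e * (p1 * d_u1 A p1 p2 0 e - p2 * d_u2 A p1 p2 0 e) = 0 \<and>
       - A p1 p2 0 e * p2^2 * chi' (p1*p2) e - B p1 p2 0 e * (chi0 (p1*p2) e + p1*p2*chi' (p1*p2) e)
       - chi0 (p1*p2) e * (p1 * d_u1 B p1 p2 0 e - p2 * d_u2 B p1 p2 0 e) = 0"
    if p: "norm p1 < R" "norm p2 < R" "norm e < R" for p1 p2 e
  proof -
    have pr: "norm p1 < r3" "norm p2 < r3" "norm (0::complex) < r3" "norm e < r3" using p R by auto
    have pc: "norm p1 < r1" "norm p2 < r1" "norm (0::complex) < r1" "norm e < r1" using p R by auto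
    note be = bracket_eqs[OF conjunct1[OF r3(2)[OF pr]] conjunct2[OF r3(2)[OF pr]] r1(2)[OF pc] chiD[OF hR[OF p(1,2)] p(3)]]
    show ?thesis using be by blast
  qed
  have eig: "u1 * d_u1 A u1 u2 0 e - u2 * d_u2 A u1 u2 0 e = A u1 u2 0 e \<and>
         u1 * d_u1 B u1 u2 0 e - u2 * d_u2 B u1 u2 0 e = - B u1 u2 0 e"
    if "3 * norm u1 < R" "3 * norm u2 < R" "norm e < R" for u1 u2 e
    by (rule eigen[OF HA HB R(1,2,8) chiD chinz _ _ that]) (use E in blast)+
  have invA: "exp (- (\<i> * t * 1)) * A (exp (\<i> * t) * z1) (exp (- (\<i> * t)) * z2) 0 e = A z1 z2 0 e"
    if "9 * norm z1 < R" "9 * norm z2 < R" "norm e < R" "\<bar>Im t\<bar> < 1" for z1 z2 e t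
    by (rule invariance[OF HA R(1,2) _ that]) (use eig in simp)
  have invB: "exp (- (\<i> * t * (-1))) * B (exp (\<i> * t) * z1) (exp (- (\<i> * t)) * z2) 0 e = B z1 z2 0 e"
    if "9 * norm z1 < R" "9 * norm z2 < R" "norm e < R" "\<bar>Im t\<bar> < 1" for z1 z2 e t
    by (rule invariance[OF HB R(1,2) _ that]) (use eig in simp)
  have xA: "A z1 z2 z3 z4 = A z1 z2 0 z4" if "norm z1 < R" "norm z2 < R" "norm z3 < R" "norm z4 < R" for z1 z2 z3 z4
    by (rule xindep[OF HA R(2) _ that]) (use r2(2) that R in auto)
  have xB: "B z1 z2 z3 z4 = B z1 z2 0 z4" if "norm z1 < R" "norm z2 < R" "norm z3 < R" "norm z4 < R" for z1 z2 z3 z4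
    by (rule xindep[OF HB R(2) _ that]) (use r2(2) that R in auto)
  have R9: "0 < R / 9" "R / 9 \<le> R0" using R by auto
  have supA: "k = 0 \<and> int i - int j = 1" if "cA i j k l \<noteq> 0" for i j k l
  proof (rule support[OF HA R9 _ that])
    fix z1 z2 z3 z4 :: complex and \<theta> :: real
    assume z: "norm z1 < R / 9" "norm z2 < R / 9" "norm z3 < R / 9" "norm z4 < R / 9"
    have zR1: "norm z1 < R" using z(1) R(1) by linarith
    have zR2: "norm z2 < R" using z(2) R(1) by linarith
    have zR3: "norm z3 < R" using z(3) R(1) by linarith
    have zR4: "norm z4 < R" using z(4) R(1) by linarith
    have "A z1 z2 z3 z4 = A z1 z2 0 z4" by (rule xA[OF zR1 zR2 zR3 zR4])
    also have "\<dots> = exp (- (\<i> * complex_of_real \<theta> * 1)) * A (exp (\<i> * complex_of_real \<theta>) * z1) (exp (- (\<i> * complex_of_real \<theta>)) * z2) 0 z4"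
      by (rule invA[symmetric]) (use z zR4 in auto)
    finally show "A z1 z2 z3 z4 = exp (- (\<i> * complex_of_real \<theta> * of_int 1)) *
        A (exp (\<i> * complex_of_real \<theta>) * z1) (exp (- (\<i> * complex_of_real \<theta>)) * z2) 0 z4" by simp
  qed
  have supB: "k = 0 \<and> int i - int j = -1" if "cB i j k l \<noteq> 0" for i j k l
  proof (rule support[OF HB R9 _ that])
    fix z1 z2 z3 z4 :: complex and \<theta> :: real
    assume z: "norm z1 < R / 9" "norm z2 < R / 9" "norm z3 < R / 9" "norm z4 < R / 9"
    have zR1: "norm z1 < R" using z(1) R(1) by linarith
    have zR2: "norm z2 < R" using z(2) R(1) by linarith
    have zR3: "norm z3 < R" using z(3) R(1) by linarith
    have zR4: "norm z4 < R" using z(4) R(1) by linarith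
    have "B z1 z2 z3 z4 = B z1 z2 0 z4" by (rule xB[OF zR1 zR2 zR3 zR4])
    also have "\<dots> = exp (- (\<i> * complex_of_real \<theta> * (-1))) * B (exp (\<i> * complex_of_real \<theta>) * z1) (exp (- (\<i> * complex_of_real \<theta>)) * z2) 0 z4"
      by (rule invB[symmetric]) (use z zR4 in auto)
    finally show "B z1 z2 z3 z4 = exp (- (\<i> * complex_of_real \<theta> * of_int (-1))) *
        B (exp (\<i> * complex_of_real \<theta>) * z1) (exp (- (\<i> * complex_of_real \<theta>)) * z2) 0 z4" by simp
  qed
  have supA': "k = 0 \<and> i = Suc j" if "cA i j k l \<noteq> 0" for i j k l using supA[OF that] by auto
  have supB': "k = 0 \<and> i = Suc j" if "(\<lambda>i j k l. cB j i k l) i j k l \<noteq> 0" for i j k l using supB[of j i k l] that by auto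
  define ra where "ra = min ((R0/2) * (R0/2)) (R0/2)"
  define a where "a = (\<lambda>h e. \<Sum>\<^sub>\<infinity>(j,l). cA (Suc j) j 0 l * h ^ j * e ^ l)"
  define b where "b = (\<lambda>h e. \<Sum>\<^sub>\<infinity>(j,l). cB j (Suc j) 0 l * h ^ j * e ^ l)"
  have ra0: "0 < ra" unfolding ra_def using R0 by simp
  have HSa: "HS2 ra (\<lambda>j l. cA (Suc j) j 0 l) a" unfolding ra_def a_def
    by (rule sparse_coeff(2)[OF HA R0]) (use supA' in blast)
  have HSb': "HS2 ra (\<lambda>j l. (\<lambda>i j k l. cB j i k l) (Suc j) j 0 l) b" unfolding ra_def b_def
    by (rule sparse_coeff(2)[OF HS4_swap[OF HB] R0]) (use supB' in blast)
  then have HSb: "HS2 ra (\<lambda>j l. cB j (Suc j) 0 l) b" by simp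
  have spA3: "A z1 z2 z3 z4 = a (z1 * z2) z4 * z1" if "norm z1 < R0" "norm z2 < R0" "norm z3 < R0" "norm z4 < R0"
     "norm (z1 * z2) < ra" "norm z4 < ra" for z1 z2 z3 z4
    unfolding a_def by (rule sparse_coeff(3)[OF HA R0 _ that[unfolded ra_def]]) (use supA' in blast)
  have spB3: "B z2 z1 z3 z4 = b (z1 * z2) z4 * z1" if "norm z1 < R0" "norm z2 < R0" "norm z3 < R0" "norm z4 < R0"
     "norm (z1 * z2) < ra" "norm z4 < ra" for z1 z2 z3 z4
    using sparse_coeff(3)[OF HS4_swap[OF HB] R0 _ that[unfolded ra_def]] supB' unfolding b_def by blast
  define \<rho>1 where "\<rho>1 = min (min R0 ra) (min 1 r2)"
  have r1p: "0 < \<rho>1" using R0 ra0 r2(1) by (simp add: \<rho>1_def)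
  have r1l: "\<rho>1 \<le> R0" "\<rho>1 \<le> ra" "\<rho>1 \<le> 1" "\<rho>1 \<le> r2" by (simp_all add: \<rho>1_def)
  have prod_small: "norm (u1 * u2) < \<rho>1" if "norm u1 < \<rho>1" "norm u2 < \<rho>1" for u1 u2 :: complex
  proof -
    have "norm (u1 * u2) \<le> norm u1 * 1" unfolding norm_mult using that r1l by (intro mult_left_mono) auto
    then show ?thesis using that by simp
  qed
  have eqA: "eqon \<rho>1 A (\<lambda>u1 u2 x e. a (u1 * u2) e * u1)"
  proof (intro allI impI)
    fix u1 u2 x e :: complex assume u: "norm u1 < \<rho>1 \<and> norm u2 < \<rho>1 \<and> norm x < \<rho>1 \<and> norm e < \<rho>1"
    show "A u1 u2 x e = a (u1 * u2) e * u1"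
      by (rule spA3) (use u r1l prod_small[of u1 u2] in auto)
  qed
  have eqB: "eqon \<rho>1 B (\<lambda>u1 u2 x e. b (u1 * u2) e * u2)"
  proof (intro allI impI)
    fix u1 u2 x e :: complex assume u: "norm u1 < \<rho>1 \<and> norm u2 < \<rho>1 \<and> norm x < \<rho>1 \<and> norm e < \<rho>1"
    have "B u1 u2 x e = b (u2 * u1) e * u2"
      by (rule spB3) (use u r1l prod_small[of u2 u1] in auto)
    then show "B u1 u2 x e = b (u1 * u2) e * u2" by (simp add: mult.commute)
  qed
  define a' where "a' h e = deriv (\<lambda>s. a s e) h" for h e
  define b' where "b' h e = deriv (\<lambda>s. b s e) h" for h e
  have aD: "((\<lambda>s. a s e) has_field_derivative a' h e) (at h)" if "norm h < ra" "norm e < ra" for h e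
    unfolding a'_def by (rule chi_deriv[OF HSa that])
  have bD: "((\<lambda>s. b s e) has_field_derivative b' h e) (at h)" if "norm h < ra" "norm e < ra" for h e
    unfolding b'_def by (rule chi_deriv[OF HSb that])
  have key: "a (p1*p2) e + p1*p2 * a' (p1*p2) e + b (p1*p2) e + p1*p2 * b' (p1*p2) e = 0"
    if p: "norm p1 < \<rho>1" "norm p2 < \<rho>1" "norm e < \<rho>1" for p1 p2 e
  proof -
    have z0: "norm (0::complex) < \<rho>1" using r1p by simp
    have hra: "norm (p1 * p2) < ra" "norm e < ra" using prod_small[OF p(1,2)] p(3) r1l by auto
    have l: "d_u1 A p1 p2 0 e + d_u2 B p1 p2 0 e = 0" using r2(2)[of p1 p2 0 e] p r1l r2(1) by auto
    have d1: "d_u1 A p1 p2 0 e = a' (p1*p2) e * p2 * p1 + a (p1*p2) e"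
    proof -
      have "d_u1 A p1 p2 0 e = d_u1 (\<lambda>u1 u2 x e. a (u1 * u2) e * u1) p1 p2 0 e"
        by (rule loc(1)[OF eqA p(1,2) z0 p(3)])
      also have "\<dots> = a' (p1*p2) e * p2 * p1 + a (p1*p2) e"
        unfolding d_u1_def using Dp1[OF aD[OF hra]] by simp
      finally show ?thesis .
    qed
    have d2: "d_u2 B p1 p2 0 e = b' (p1*p2) e * p1 * p2 + b (p1*p2) e"
    proof -
      have "d_u2 B p1 p2 0 e = d_u2 (\<lambda>u1 u2 x e. b (u1 * u2) e * u2) p1 p2 0 e"
        by (rule loc(2)[OF eqB p(1,2) z0 p(3)])
      also have "\<dots> = b' (p1*p2) e * p1 * p2 + b (p1*p2) e"
        unfolding d_u2_def using Dp5[OF bD[OF hra]] by simp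
      finally show ?thesis .
    qed
    show ?thesis using l unfolding d1 d2 by (simp add: algebra_simps)
  qed
  define \<rho>2 where "\<rho>2 = \<rho>1 * \<rho>1 / 4"
  have r2p: "0 < \<rho>2" using r1p by (simp add: \<rho>2_def)
  have ab: "a h e + b h e = 0" if h: "norm h < \<rho>2" and e: "norm e < \<rho>1" for h e
  proof (cases "h = 0")
    case True
    have "norm (0::complex) < \<rho>1" using r1p by simp
    from key[OF this this e] True show ?thesis by simp
  next
    case False
    define G where "G s = s * (a s e + b s e)" for s
    have G0: "((\<lambda>s. G s) has_field_derivative 0) (at s)" if s: "norm s < \<rho>2" for s
    proof -
      define p1 :: complex where "p1 = of_real (\<rho>1 / 2)"
      define p2 where "p2 = s / p1"
      have p1n: "norm p1 = \<rho>1 / 2" "p1 \<noteq> 0" using r1p by (auto simp: p1_def)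
      have sp: "p1 * p2 = s" using p1n by (simp add: p2_def)
      have pn: "norm p1 < \<rho>1" "norm p2 < \<rho>1"
      proof -
        show "norm p1 < \<rho>1" using p1n r1p by simp
        have "norm p2 = norm s / (\<rho>1 / 2)" unfolding p2_def norm_divide p1n(1) ..
        also have "\<dots> < \<rho>2 / (\<rho>1 / 2)" using s r1p by (intro divide_strict_right_mono) auto
        also have "\<dots> = \<rho>1 / 2" using r1p by (simp add: \<rho>2_def field_simps)
        finally show "norm p2 < \<rho>1" using r1p by simp
      qed
      have sra: "norm s < ra" "norm e < ra" using prod_small[OF pn] sp e r1l by auto
      have "((\<lambda>s. G s) has_field_derivative 1 * (a s e + b s e) + s * (a' s e + b' s e)) (at s)"
        unfolding G_def by (rule DERIV_mult'[THEN DERIV_cong], rule DERIV_ident, rule DERIV_add[OF aD[OF sra] bD[OF sra]]) (simp add: algebra_simps)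
      moreover have "1 * (a s e + b s e) + s * (a' s e + b' s e) = 0"
        using key[OF pn e] unfolding sp by (simp add: algebra_simps)
      ultimately show ?thesis by simp
    qed
    have z00: "norm (0::complex) < \<rho>2" using r2p by simp
    have "G h = G 0" by (rule zero_const_ball[OF G0 h z00])
    then show ?thesis using False by (simp add: G_def)
  qed
  define \<rho>f where "\<rho>f = min (\<rho>1 / 2) r1"
  have rfp: "0 < \<rho>f" using r1p r1(1) by (simp add: \<rho>f_def)
  have pt: "fst X u1 u2 x e = fst (ham_vf a) u1 u2 x e \<and>
       fst (snd X) u1 u2 x e = fst (snd (ham_vf a)) u1 u2 x e \<and> snd (snd X) u1 u2 x e = snd (snd (ham_vf a)) u1 u2 x e"
    if u: "norm u1 < \<rho>f \<and> norm u2 < \<rho>f \<and> norm x < \<rho>f \<and> norm e < \<rho>f" for u1 u2 x e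
  proof -
    have u1: "norm u1 < \<rho>1" "norm u2 < \<rho>1" "norm x < \<rho>1" "norm e < \<rho>1" using u r1p by (auto simp: \<rho>f_def)
    have hs: "norm (u1 * u2) < \<rho>2"
    proof -
      have a1: "norm u1 < \<rho>1 / 2" "norm u2 < \<rho>1 / 2" using u by (auto simp: \<rho>f_def)
      have "norm u1 * norm u2 \<le> norm u1 * (\<rho>1/2)" using a1 by (intro mult_left_mono) auto
      also have "\<dots> < (\<rho>1/2) * (\<rho>1/2)" using a1 r1p by (intro mult_strict_right_mono) auto
      finally show ?thesis by (simp add: \<rho>2_def norm_mult)
    qed
    have "A u1 u2 x e = a (u1 * u2) e * u1" by (rule eqA[rule_format]) (use u1 in simp)
    moreover have "B u1 u2 x e = - a (u1 * u2) e * u2"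
    proof -
      have "B u1 u2 x e = b (u1 * u2) e * u2" by (rule eqB[rule_format]) (use u1 in simp)
      also have "b (u1 * u2) e = - a (u1 * u2) e" using ab[OF hs u1(4)] by (simp add: eq_neg_iff_add_eq_0 add.commute)
      finally show ?thesis by simp
    qed
    moreover have "C u1 u2 x e = 0" proof -
      have "norm u1 < r1" "norm u2 < r1" "norm x < r1" "norm e < r1" using u by (auto simp: \<rho>f_def)
      then show ?thesis by (rule r1(2))
    qed
    ultimately show "fst X u1 u2 x e = fst (ham_vf a) u1 u2 x e \<and>
       fst (snd X) u1 u2 x e = fst (snd (ham_vf a)) u1 u2 x e \<and> snd (snd X) u1 u2 x e = snd (snd (ham_vf a)) u1 u2 x e"
      unfolding Xd ham_vf_def fst_conv snd_conv by (intro conjI)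
  qed
  have germ: "germ_eq X (ham_vf a)"
    unfolding germ_eq_def by (rule near0I[OF rfp], rule pt) simp
  have "analytic0_2 a" unfolding analytic0_2_def
    by (rule exI[of _ ra], rule conjI[OF ra0], rule exI[of _ "\<lambda>j l. cA (Suc j) j 0 l"]) (rule HSa)
  with germ show ?thesis by blast
qed



lemma bracket_zero:
  fixes X Y :: vfield and a :: "complex \<Rightarrow> complex \<Rightarrow> complex" and g :: "complex \<Rightarrow> complex \<Rightarrow> complex \<Rightarrow> complex"
  assumes X1: "eqon \<rho> (fst X) (\<lambda>u1 u2 x e. a (u1 * u2) e * u1)"
    and X2: "eqon \<rho> (fst (snd X)) (\<lambda>u1 u2 x e. - a (u1 * u2) e * u2)"
    and X3: "eqon \<rho> (snd (snd X)) (\<lambda>u1 u2 x e. 0)"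
    and Y1: "eqon \<rho> (fst Y) (\<lambda>u1 u2 x e. g (u1 * u2) x e * u1)"
    and Y2: "eqon \<rho> (fst (snd Y)) (\<lambda>u1 u2 x e. - g (u1 * u2) x e * u2)"
    and W: "d_u1 (snd (snd Y)) p1 p2 x e = 0" "d_u2 (snd (snd Y)) p1 p2 x e = 0"
    and aD: "((\<lambda>s. a s e) has_field_derivative a') (at (p1 * p2))"
    and gD: "((\<lambda>s. g s x e) has_field_derivative g') (at (p1 * p2))"
    and p: "norm p1 < \<rho>" "norm p2 < \<rho>" "norm x < \<rho>" "norm e < \<rho>"
  shows "fst (lie_bracket X Y) p1 p2 x e = 0 \<and> fst (snd (lie_bracket X Y)) p1 p2 x e = 0
      \<and> snd (snd (lie_bracket X Y)) p1 p2 x e = 0"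
proof -
  have xv: "fst X p1 p2 x e = a (p1 * p2) e * p1" "fst (snd X) p1 p2 x e = - a (p1 * p2) e * p2"
      "snd (snd X) p1 p2 x e = 0"
    using X1 X2 X3 p by auto
  have yv: "fst Y p1 p2 x e = g (p1 * p2) x e * p1" "fst (snd Y) p1 p2 x e = - g (p1 * p2) x e * p2"
    using Y1 Y2 p by auto
  have x11: "d_u1 (fst X) p1 p2 x e = a' * p2 * p1 + a (p1 * p2) e"
    unfolding loc(1)[OF X1 p] unfolding d_u1_def using Dp1[OF aD] by simp
  have x12: "d_u2 (fst X) p1 p2 x e = a' * p1 * p1"
    unfolding loc(2)[OF X1 p] unfolding d_u2_def using Dp2[OF aD] by simp
  have x13: "d_x (fst X) p1 p2 x e = 0"
    unfolding loc(3)[OF X1 p] unfolding d_x_def by (rule deriv_const_fun)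
  have x21: "d_u1 (fst (snd X)) p1 p2 x e = - (a' * p2 * p2)"
    unfolding loc(1)[OF X2 p] unfolding d_u1_def using Dp3[OF aD] by simp
  have x22: "d_u2 (fst (snd X)) p1 p2 x e = - (a' * p1 * p2 + a (p1 * p2) e)"
    unfolding loc(2)[OF X2 p] unfolding d_u2_def using Dp4[OF aD] by simp
  have x23: "d_x (fst (snd X)) p1 p2 x e = 0"
    unfolding loc(3)[OF X2 p] unfolding d_x_def by (rule deriv_const_fun)
  have x31: "d_u1 (snd (snd X)) p1 p2 x e = 0" "d_u2 (snd (snd X)) p1 p2 x e = 0" "d_x (snd (snd X)) p1 p2 x e = 0"
    unfolding loc[OF X3 p] unfolding d_u1_def d_u2_def d_x_def by (rule deriv_const_fun)+
  have y11: "d_u1 (fst Y) p1 p2 x e = g' * p2 * p1 + g (p1 * p2) x e"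
    unfolding loc(1)[OF Y1 p] unfolding d_u1_def using Dp1[OF gD] by simp
  have y12: "d_u2 (fst Y) p1 p2 x e = g' * p1 * p1"
    unfolding loc(2)[OF Y1 p] unfolding d_u2_def using Dp2[OF gD] by simp
  have y21: "d_u1 (fst (snd Y)) p1 p2 x e = - (g' * p2 * p2)"
    unfolding loc(1)[OF Y2 p] unfolding d_u1_def using Dp3[OF gD] by simp
  have y22: "d_u2 (fst (snd Y)) p1 p2 x e = - (g' * p1 * p2 + g (p1 * p2) x e)"
    unfolding loc(2)[OF Y2 p] unfolding d_u2_def using Dp4[OF gD] by simp
  show ?thesis
    unfolding lie_bracket_def vf_apply_def fst_conv snd_conv
    unfolding xv yv x11 x12 x13 x21 x22 x23 x31 y11 y12 y21 y22 W
    by (simp add: algebra_simps)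
qed



lemma ham_analytic:
  assumes HSa: "HS2 ra ca a" and ra: "0 < ra"
    and eq: "eqon \<rho> F (\<lambda>u1 u2 x e. a (u1 * u2) e * u1)" and rho: "0 < \<rho>"
  shows "analytic0_4 F"
proof -
  define r' where "r' = min (min ra 1) \<rho>"
  have r'p: "0 < r'" using ra rho by (simp add: r'_def)
  define c where "c i j k l = (if i = Suc j \<and> k = 0 then ca j l else 0)" for i j k l :: nat
  define g where "g = (\<lambda>(j::nat,l::nat). (Suc j, j, 0::nat, l))"
  have injg: "inj g" by (auto simp: g_def inj_def)
  have "HS4 r' c F"
  proof (intro allI impI)
    fix z1 z2 z3 z4 :: complex assume z: "norm z1 < r' \<and> norm z2 < r' \<and> norm z3 < r' \<and> norm z4 < r'"
    have zz: "norm z1 < \<rho>" "norm z2 < \<rho>" "norm z3 < \<rho>" "norm z4 < \<rho>" using z by (auto simp: r'_def)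
    have Fz: "F z1 z2 z3 z4 = a (z1 * z2) z4 * z1" using eq zz by auto
    have hra: "norm (z1 * z2) < ra" "norm z4 < ra"
    proof -
      have "norm (z1 * z2) \<le> norm z1 * 1" unfolding norm_mult using z by (intro mult_left_mono) (auto simp: r'_def)
      then show "norm (z1 * z2) < ra" using z by (auto simp: r'_def)
      show "norm z4 < ra" using z by (auto simp: r'_def)
    qed
    have h1: "((\<lambda>n. (\<lambda>(j,l). ca j l * (z1 * z2) ^ j * z4 ^ l) n * z1) has_sum a (z1 * z2) z4 * z1) UNIV"
      using HSa hra by (intro has_sum_cmult_left) auto
    have "((\<lambda>(i,j,k,l). c i j k l * z1 ^ i * z2 ^ j * z3 ^ k * z4 ^ l) \<circ> g)
       = (\<lambda>n. (\<lambda>(j,l). ca j l * (z1 * z2) ^ j * z4 ^ l) n * z1)"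
      by (auto simp: g_def c_def fun_eq_iff power_mult_distrib mult_ac)
    with h1 have "(((\<lambda>(i,j,k,l). c i j k l * z1 ^ i * z2 ^ j * z3 ^ k * z4 ^ l) \<circ> g) has_sum a (z1 * z2) z4 * z1) UNIV"
      by simp
    then have "((\<lambda>(i,j,k,l). c i j k l * z1 ^ i * z2 ^ j * z3 ^ k * z4 ^ l) has_sum a (z1 * z2) z4 * z1) (range g)"
      using has_sum_reindex[OF injg] by blast
    then have "((\<lambda>(i,j,k,l). c i j k l * z1 ^ i * z2 ^ j * z3 ^ k * z4 ^ l) has_sum a (z1 * z2) z4 * z1) UNIV"
      by (rule has_sum_cong_neutral[THEN iffD1, rotated -1])
         (auto simp: g_def c_def image_iff split: prod.splits)
    then show "((\<lambda>(i,j,k,l). c i j k l * z1 ^ i * z2 ^ j * z3 ^ k * z4 ^ l) has_sum F z1 z2 z3 z4) UNIV"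
      using Fz by simp
  qed
  then show ?thesis unfolding analytic0_4_def
    by (intro exI[of _ r'] conjI r'p exI[of _ c])
qed

lemma zero_analytic:
  assumes eq: "eqon \<rho> F (\<lambda>u1 u2 x e. 0)" and rho: "0 < \<rho>"
  shows "analytic0_4 F"
proof -
  have "HS4 \<rho> (\<lambda>i j k l. 0) F"
  proof (intro allI impI)
    fix z1 z2 z3 z4 :: complex assume z: "norm z1 < \<rho> \<and> norm z2 < \<rho> \<and> norm z3 < \<rho> \<and> norm z4 < \<rho>"
    then have "F z1 z2 z3 z4 = 0" using eq by auto
    moreover have "(\<lambda>(i::nat,j::nat,k::nat,l::nat). (\<lambda>i j k l. 0::complex) i j k l * z1 ^ i * z2 ^ j * z3 ^ k * z4 ^ l) = (\<lambda>_. 0)"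
      by (auto simp: fun_eq_iff)
    ultimately show "((\<lambda>(i,j,k,l). (\<lambda>i j k l. 0::complex) i j k l * z1 ^ i * z2 ^ j * z3 ^ k * z4 ^ l) has_sum F z1 z2 z3 z4) UNIV"
      by simp
  qed
  then show ?thesis unfolding analytic0_4_def
    by (intro exI[of _ \<rho>] conjI rho exI[of _ "\<lambda>i j k l. 0::complex"])
qed



lemma germ_ham:
  assumes "germ_eq X (ham_vf a)"
  obtains rg where "0 < rg" "eqon rg (fst X) (\<lambda>u1 u2 x e. a (u1 * u2) e * u1)"
    "eqon rg (fst (snd X)) (\<lambda>u1 u2 x e. - a (u1 * u2) e * u2)"
    "eqon rg (snd (snd X)) (\<lambda>u1 u2 x e. 0)"
proof -
  from assms obtain rg where rg: "0 < rg" "\<forall>u1 u2 x e. norm u1 < rg \<and> norm u2 < rg \<and> norm x < rg \<and> norm e < rg \<longrightarrow>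
     fst X u1 u2 x e = fst (ham_vf a) u1 u2 x e \<and> fst (snd X) u1 u2 x e = fst (snd (ham_vf a)) u1 u2 x e \<and>
     snd (snd X) u1 u2 x e = snd (snd (ham_vf a)) u1 u2 x e"
    unfolding germ_eq_def near0_def by blast
  show ?thesis by (rule that[OF rg(1)]) (use rg(2) in \<open>auto simp: ham_vf_def\<close>)
qed

lemma eqon_mono: "eqon r F G \<Longrightarrow> r' \<le> r \<Longrightarrow> eqon r' F G"
  by auto

lemma HS2_deriv_ex:
  assumes "analytic0_2 f"
  obtains r where "0 < r" "\<And>h e. norm h < r \<Longrightarrow> norm e < r \<Longrightarrow> ((\<lambda>s. f s e) has_field_derivative deriv (\<lambda>s. f s e) h) (at h)"
proof -
  from assms obtain r c where "0 < r" "HS2 r c f" unfolding analytic0_2_def by blast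
  then show ?thesis using that chi_deriv by blast
qed

lemma backward:
  assumes c0: "analytic0_2 chi0" and c1: "analytic0_2 chi1" and a: "analytic0_2 a" and g: "germ_eq X (ham_vf a)"
  shows "vert_sympl_sym chi0 chi1 X"
proof -
  obtain rg where rg: "0 < rg" "eqon rg (fst X) (\<lambda>u1 u2 x e. a (u1 * u2) e * u1)"
    "eqon rg (fst (snd X)) (\<lambda>u1 u2 x e. - a (u1 * u2) e * u2)"
    "eqon rg (snd (snd X)) (\<lambda>u1 u2 x e. 0)" using germ_ham[OF g] by blast
  from a obtain ra ca where ra: "0 < ra" "HS2 ra ca a" unfolding analytic0_2_def by blast
  obtain rd0 where rd0: "0 < rd0" "\<And>h e. norm h < rd0 \<Longrightarrow> norm e < rd0 \<Longrightarrow> ((\<lambda>s. chi0 s e) has_field_derivative deriv (\<lambda>s. chi0 s e) h) (at h)"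
    using HS2_deriv_ex[OF c0] by blast
  obtain rd1 where rd1: "0 < rd1" "\<And>h e. norm h < rd1 \<Longrightarrow> norm e < rd1 \<Longrightarrow> ((\<lambda>s. chi1 s e) has_field_derivative deriv (\<lambda>s. chi1 s e) h) (at h)"
    using HS2_deriv_ex[OF c1] by blast
  have aD: "((\<lambda>s. a s e) has_field_derivative deriv (\<lambda>s. a s e) h) (at h)" if "norm h < ra" "norm e < ra" for h e
    by (rule chi_deriv[OF ra(2) that])
  have A1: "analytic0_4 (fst X)" by (rule ham_analytic[OF ra(2) ra(1) rg(2) rg(1)])
  have A2: "analytic0_4 (fst (snd X))"
  proof -
    have HSn: "HS2 ra (\<lambda>j l. - ca j l) (\<lambda>h e. - a h e)"
    proof (intro allI impI)
      fix z1 z2 :: complex assume "norm z1 < ra \<and> norm z2 < ra"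
      then have "((\<lambda>(i,j). ca i j * z1 ^ i * z2 ^ j) has_sum a z1 z2) UNIV" using ra by auto
      then have "((\<lambda>n. - (\<lambda>(i,j). ca i j * z1 ^ i * z2 ^ j) n) has_sum - a z1 z2) UNIV"
        by (simp add: has_sum_uminus)
      moreover have "(\<lambda>n. - (\<lambda>(i,j). ca i j * z1 ^ i * z2 ^ j) n) = (\<lambda>(i,j). (\<lambda>j l. - ca j l) i j * z1 ^ i * z2 ^ j)"
        by (auto simp: fun_eq_iff)
      ultimately show "((\<lambda>(i,j). (\<lambda>j l. - ca j l) i j * z1 ^ i * z2 ^ j) has_sum (\<lambda>h e. - a h e) z1 z2) UNIV" by simp
    qed
    have eqG: "eqon rg (\<lambda>u1 u2 x e. fst (snd X) u2 u1 x e) (\<lambda>u1 u2 x e. (\<lambda>h e. - a h e) (u1 * u2) e * u1)"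
      using rg(3) by (auto simp: mult.commute)
    have "analytic0_4 (\<lambda>u1 u2 x e. fst (snd X) u2 u1 x e)"
      by (rule ham_analytic[OF HSn ra(1) eqG rg(1)])
    then obtain r c where "0 < r" "HS4 r c (\<lambda>u1 u2 x e. fst (snd X) u2 u1 x e)"
      unfolding analytic0_4_def by blast
    then have "0 < r" "HS4 r (\<lambda>i j k l. c j i k l) (fst (snd X))"
      using HS4_swap[of r c "\<lambda>u1 u2 x e. fst (snd X) u2 u1 x e"] by auto
    then show ?thesis unfolding analytic0_4_def by (intro exI[of _ r] conjI exI[of _ "\<lambda>i j k l. c j i k l"])
  qed
  have A3: "analytic0_4 (snd (snd X))" by (rule zero_analytic[OF rg(4) rg(1)])
  define \<rho> where "\<rho> = min (min rg (min ra 1)) (min rd0 rd1)"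
  have rp: "0 < \<rho>" using rg(1) ra(1) rd0(1) rd1(1) by (simp add: \<rho>_def)
  have rl: "\<rho> \<le> rg" "\<rho> \<le> ra" "\<rho> \<le> 1" "\<rho> \<le> rd0" "\<rho> \<le> rd1" by (simp_all add: \<rho>_def)
  have e1: "eqon \<rho> (fst X) (\<lambda>u1 u2 x e. a (u1 * u2) e * u1)" using rg(2) rl by auto
  have e2: "eqon \<rho> (fst (snd X)) (\<lambda>u1 u2 x e. - a (u1 * u2) e * u2)" using rg(3) rl by auto
  have e3: "eqon \<rho> (snd (snd X)) (\<lambda>u1 u2 x e. 0)" using rg(4) rl by auto
  have ps: "norm (p1 * p2) < \<rho>" if "norm p1 < \<rho>" "norm p2 < \<rho>" for p1 p2 :: complex
  proof -
    have "norm (p1 * p2) \<le> norm p1 * 1" unfolding norm_mult using that rl by (intro mult_left_mono) auto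
    then show ?thesis using that by simp
  qed
  have C0: "near0 (\<lambda>u1 u2 x e. snd (snd X) u1 u2 x e = 0)"
    by (rule near0I[OF rp]) (use e3 in auto)
  have LA: "lie_area_vanishes X"
    unfolding lie_area_vanishes_def
  proof (rule near0I[OF rp])
    fix p1 p2 x e :: complex assume p: "norm p1 < \<rho>" "norm p2 < \<rho>" "norm x < \<rho>" "norm e < \<rho>"
    have hD: "((\<lambda>s. a s e) has_field_derivative deriv (\<lambda>s. a s e) (p1 * p2)) (at (p1 * p2))"
      by (rule aD) (use ps[OF p(1,2)] p(4) rl in auto)
    have "d_u1 (fst X) p1 p2 x e = deriv (\<lambda>s. a s e) (p1 * p2) * p2 * p1 + a (p1 * p2) e"
      unfolding loc(1)[OF e1 p] unfolding d_u1_def using Dp1[OF hD] by simp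
    moreover have "d_u2 (fst (snd X)) p1 p2 x e = - (deriv (\<lambda>s. a s e) (p1 * p2) * p1 * p2 + a (p1 * p2) e)"
      unfolding loc(2)[OF e2 p] unfolding d_u2_def using Dp4[OF hD] by simp
    moreover have "d_x (fst (snd X)) p1 p2 x e = 0"
      unfolding loc(3)[OF e2 p] unfolding d_x_def by (rule deriv_const_fun)
    moreover have "d_x (fst X) p1 p2 x e = 0"
      unfolding loc(3)[OF e1 p] unfolding d_x_def by (rule deriv_const_fun)
    ultimately show "d_u1 (fst X) p1 p2 x e + d_u2 (fst (snd X)) p1 p2 x e = 0 \<and>
       - d_x (fst (snd X)) p1 p2 x e = 0 \<and> d_x (fst X) p1 p2 x e = 0"
      by (simp add: algebra_simps)
  qed
  have BR: "germ_eq (lie_bracket X (Z_G chi0 chi1)) zero_vf"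
    unfolding germ_eq_def
  proof (rule near0I[OF rp])
    fix p1 p2 x e :: complex assume p: "norm p1 < \<rho>" "norm p2 < \<rho>" "norm x < \<rho>" "norm e < \<rho>"
    have hD: "((\<lambda>s. a s e) has_field_derivative deriv (\<lambda>s. a s e) (p1 * p2)) (at (p1 * p2))"
      by (rule aD) (use ps[OF p(1,2)] p(4) rl in auto)
    have h0: "((\<lambda>s. chi0 s e) has_field_derivative deriv (\<lambda>s. chi0 s e) (p1 * p2)) (at (p1 * p2))"
      by (rule rd0(2)) (use ps[OF p(1,2)] p(4) rl in auto)
    have h1: "((\<lambda>s. chi1 s e) has_field_derivative deriv (\<lambda>s. chi1 s e) (p1 * p2)) (at (p1 * p2))"
      by (rule rd1(2)) (use ps[OF p(1,2)] p(4) rl in auto)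
    have gD: "((\<lambda>s. chi_fun chi0 chi1 s x e) has_field_derivative
        deriv (\<lambda>s. chi0 s e) (p1 * p2) + x * deriv (\<lambda>s. chi1 s e) (p1 * p2)) (at (p1 * p2))"
      unfolding chi_fun_def by (rule DERIV_add[OF h0 DERIV_cmult[OF h1]])
    have Y1: "eqon \<rho> (fst (Z_G chi0 chi1)) (\<lambda>u1 u2 x e. chi_fun chi0 chi1 (u1 * u2) x e * u1)"
      by (simp add: Z_G_def)
    have Y2: "eqon \<rho> (fst (snd (Z_G chi0 chi1))) (\<lambda>u1 u2 x e. - chi_fun chi0 chi1 (u1 * u2) x e * u2)"
      by (simp add: Z_G_def)
    have W: "d_u1 (snd (snd (Z_G chi0 chi1))) p1 p2 x e = 0" "d_u2 (snd (snd (Z_G chi0 chi1))) p1 p2 x e = 0"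
      by (simp_all add: Z_G_def d_u1_def d_u2_def deriv_const_fun)
    note bz = bracket_zero[where g="\<lambda>h x e. chi_fun chi0 chi1 h x e", OF e1 e2 e3 Y1 Y2 W hD gD p]
    then show "fst (lie_bracket X (Z_G chi0 chi1)) p1 p2 x e = fst zero_vf p1 p2 x e \<and>
       fst (snd (lie_bracket X (Z_G chi0 chi1))) p1 p2 x e = fst (snd zero_vf) p1 p2 x e \<and>
       snd (snd (lie_bracket X (Z_G chi0 chi1))) p1 p2 x e = snd (snd zero_vf) p1 p2 x e"
      by (simp add: zero_vf_def)
  qed
  show ?thesis unfolding vert_sympl_sym_def using A1 A2 A3 C0 LA BR by blast
qed

lemma commute:
  assumes a: "analytic0_2 a" and b: "analytic0_2 b" and gX: "germ_eq X (ham_vf a)" and gY: "germ_eq Y (ham_vf b)"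
  shows "germ_eq (lie_bracket X Y) zero_vf"
proof -
  obtain rg where rg: "0 < rg" "eqon rg (fst X) (\<lambda>u1 u2 x e. a (u1 * u2) e * u1)"
    "eqon rg (fst (snd X)) (\<lambda>u1 u2 x e. - a (u1 * u2) e * u2)"
    "eqon rg (snd (snd X)) (\<lambda>u1 u2 x e. 0)" using germ_ham[OF gX] by blast
  obtain sg where sg: "0 < sg" "eqon sg (fst Y) (\<lambda>u1 u2 x e. b (u1 * u2) e * u1)"
    "eqon sg (fst (snd Y)) (\<lambda>u1 u2 x e. - b (u1 * u2) e * u2)"
    "eqon sg (snd (snd Y)) (\<lambda>u1 u2 x e. 0)" using germ_ham[OF gY] by blast
  obtain ra where ra: "0 < ra" "\<And>h e. norm h < ra \<Longrightarrow> norm e < ra \<Longrightarrow> ((\<lambda>s. a s e) has_field_derivative deriv (\<lambda>s. a s e) h) (at h)"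
    using HS2_deriv_ex[OF a] by blast
  obtain rb where rb: "0 < rb" "\<And>h e. norm h < rb \<Longrightarrow> norm e < rb \<Longrightarrow> ((\<lambda>s. b s e) has_field_derivative deriv (\<lambda>s. b s e) h) (at h)"
    using HS2_deriv_ex[OF b] by blast
  define \<rho> where "\<rho> = min (min rg sg) (min (min ra rb) 1)"
  have rp: "0 < \<rho>" using rg(1) sg(1) ra(1) rb(1) by (simp add: \<rho>_def)
  have rl: "\<rho> \<le> rg" "\<rho> \<le> sg" "\<rho> \<le> ra" "\<rho> \<le> rb" "\<rho> \<le> 1" by (simp_all add: \<rho>_def)
  have e1: "eqon \<rho> (fst X) (\<lambda>u1 u2 x e. a (u1 * u2) e * u1)" using rg(2) rl by auto
  have e2: "eqon \<rho> (fst (snd X)) (\<lambda>u1 u2 x e. - a (u1 * u2) e * u2)" using rg(3) rl by auto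
  have e3: "eqon \<rho> (snd (snd X)) (\<lambda>u1 u2 x e. 0)" using rg(4) rl by auto
  have f1: "eqon \<rho> (fst Y) (\<lambda>u1 u2 x e. (\<lambda>h x e. b h e) (u1 * u2) x e * u1)" using sg(2) rl by auto
  have f2: "eqon \<rho> (fst (snd Y)) (\<lambda>u1 u2 x e. - (\<lambda>h x e. b h e) (u1 * u2) x e * u2)" using sg(3) rl by auto
  have f3: "eqon \<rho> (snd (snd Y)) (\<lambda>u1 u2 x e. 0)" using sg(4) rl by auto
  have ps: "norm (p1 * p2) < \<rho>" if "norm p1 < \<rho>" "norm p2 < \<rho>" for p1 p2 :: complex
  proof -
    have "norm (p1 * p2) \<le> norm p1 * 1" unfolding norm_mult using that rl by (intro mult_left_mono) auto
    then show ?thesis using that by simp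
  qed
  show ?thesis unfolding germ_eq_def
  proof (rule near0I[OF rp])
    fix p1 p2 x e :: complex assume p: "norm p1 < \<rho>" "norm p2 < \<rho>" "norm x < \<rho>" "norm e < \<rho>"
    have hD: "((\<lambda>s. a s e) has_field_derivative deriv (\<lambda>s. a s e) (p1 * p2)) (at (p1 * p2))"
      by (rule ra(2)) (use ps[OF p(1,2)] p(4) rl in auto)
    have gD: "((\<lambda>s. (\<lambda>h x e. b h e) s x e) has_field_derivative deriv (\<lambda>s. b s e) (p1 * p2)) (at (p1 * p2))"
      using rb(2)[of "p1 * p2" e] ps[OF p(1,2)] p(4) rl by auto
    have W: "d_u1 (snd (snd Y)) p1 p2 x e = 0" "d_u2 (snd (snd Y)) p1 p2 x e = 0"
      unfolding loc[OF f3 p] unfolding d_u1_def d_u2_def by (rule deriv_const_fun)+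
    note bz = bracket_zero[OF e1 e2 e3 f1 f2 W hD gD p]
    then show "fst (lie_bracket X Y) p1 p2 x e = fst zero_vf p1 p2 x e \<and>
       fst (snd (lie_bracket X Y)) p1 p2 x e = fst (snd zero_vf) p1 p2 x e \<and>
       snd (snd (lie_bracket X Y)) p1 p2 x e = snd (snd zero_vf) p1 p2 x e"
      by (simp add: zero_vf_def)
  qed
qed

theorem mainTheorem12:
  fixes chi0 chi1 :: "complex \<Rightarrow> complex \<Rightarrow> complex"
  assumes "analytic0_2 chi0" and "analytic0_2 chi1" and "chi0 0 0 \<noteq> 0"
  shows "(\<forall>X. vert_sympl_sym chi0 chi1 X \<longleftrightarrow> (\<exists>a. analytic0_2 a \<and> germ_eq X (ham_vf a)))
       \<and> (\<forall>X Y. vert_sympl_sym chi0 chi1 X \<and> vert_sympl_sym chi0 chi1 Y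
              \<longrightarrow> germ_eq (lie_bracket X Y) zero_vf)"
proof (intro conjI allI iffI impI)
  fix X assume "vert_sympl_sym chi0 chi1 X"
  then show "\<exists>a. analytic0_2 a \<and> germ_eq X (ham_vf a)" by (rule forward[OF assms(1) assms(3)])
next
  fix X assume "\<exists>a. analytic0_2 a \<and> germ_eq X (ham_vf a)"
  then obtain a where "analytic0_2 a" "germ_eq X (ham_vf a)" by blast
  then show "vert_sympl_sym chi0 chi1 X" using backward[OF assms(1,2)] by blast
next
  fix X Y assume XY: "vert_sympl_sym chi0 chi1 X \<and> vert_sympl_sym chi0 chi1 Y"
  obtain a where a: "analytic0_2 a" "germ_eq X (ham_vf a)" using forward[OF assms(1) assms(3)] XY by blast
  obtain b where b: "analytic0_2 b" "germ_eq Y (ham_vf b)" using forward[OF assms(1) assms(3)] XY by blast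
  show "germ_eq (lie_bracket X Y) zero_vf" by (rule commute[OF a(1) b(1) a(2) b(2)])
qed

end
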